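(* Let $n>1$, $\ell_0\ge2$, $\ell\in\mathbb N$ with $\ell\ge\ell_0$, $\mathbf k\in(\mathbb Z/(2^\ell\mathbb Z))^n$, $\mathbf e\in\{0,1\}^n$, $\mathbf q\in\mathbb Z^n$, and let $\psi^{\rm iso}_{\ell,\mathbf k,\mathbf e}$, $\xi_{\mathbf q}$ be as in the context. Let $\mathrm{zero}(\mathbf x)=[n]\setminus\mathrm{supp}(\mathbf x)$. Then: (a) If $\mathbf q=\mathbf 0$: $(\nabla\psi^{\rm iso}_{\ell,\mathbf k,\mathbf e},\nabla\xi_{\mathbf 0})=0$; $(\boldsymbol\beta\cdot\nabla\psi^{\rm iso}_{\ell,\mathbf k,\mathbf e},\xi_{\mathbf 0})=0$ for all $\boldsymbol\beta\in\mathbb R^n$; $|(\psi^{\rm iso}_{\ell,\mathbf k,\mathbf e},\xi_{\mathbf 0})|=2^{-n\ell/2}$ if $\mathbf e=\mathbf 0$ and $=0$ if $\mathbf e\ne\mathbf 0$. (b) If $\mathbf q\ne\mathbf 0$ and $\mathrm{zero}(\mathbf q)\subseteq\mathrm{zero}(\mathbf e)$, then for every $\boldsymbol\gamma\in[0,2]^{\|\mathbf q\|_0}$, $$|(\nabla\psi^{\rm iso}_{\ell,\mathbf k,\mathbf e},\nabla\xi_{\mathbf q})|\lesssim2^{(-\frac n2+2\|\mathbf q\|_0-\|\widehat{\boldsymbol\gamma}\|_1)\ell}|\widehat{\mathbf q}|^{\widehat{\boldsymbol\gamma}-\mathbf 2}\|\mathbf q\|_2^2,$$ $$|(\boldsymbol\beta\cdot\nabla\psi^{\rm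 iso}_{\ell,\mathbf k,\mathbf e},\xi_{\mathbf q})|\lesssim2^{(-\frac n2+2\|\mathbf q\|_0-\|\widehat{\boldsymbol\gamma}\|_1)\ell}|\widehat{\mathbf q}|^{\widehat{\boldsymbol\gamma}-\mathbf 2}\|\boldsymbol\beta\|_2\|\mathbf q\|_2\quad\forall\boldsymbol\beta\in\mathbb R^n,$$ $$|(\psi^{\rm iso}_{\ell,\mathbf k,\mathbf e},\xi_{\mathbf q})|\lesssim2^{(-\frac n2+2\|\mathbf q\|_0-\|\widehat{\boldsymbol\gamma}\|_1)\ell}|\widehat{\mathbf q}|^{\widehat{\boldsymbol\gamma}-\mathbf 2},$$ with hidden constants depending exponentially on $n$ only. (c) If $\mathbf q\ne\mathbf 0$ and $\mathrm{zero}(\mathbf q)\not\subseteq\mathrm{zero}(\mathbf e)$: $(\nabla\psi^{\rm iso}_{\ell,\mathbf k,\mathbf e},\nabla\xi_{\mathbf q})=0$, $(\boldsymbol\beta\cdot\nabla\psi^{\rm iso}_{\ell,\mathbf k,\mathbf e},\xi_{\mathbf q})=0$ for all $\boldsymbol\beta\in\mathbb R^n$, and $(\psi^{\rm iso}_{\ell,\mathbf k,\mathbf e},\xi_{\mathbf q})=0$.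
   Context: $\mathcal D=(0,1)^n$, $(u,v)=\int_{\mathcal D}u\bar v$. 1D functions: $\varphi(x)=\max\{0,1-|x|\}$, $\psi(x)=\sum_{j=-1}^3b_j\varphi(2x-j)$ with $(b_{-1},\dots,b_3)=(\tfrac14,\tfrac12,-\tfrac32,\tfrac12,\tfrac14)$ (biorthogonal B-spline wavelets of order $(2,2)$), $\varphi_{\ell,k}=2^{\ell/2}\varphi(2^\ell\cdot-k)$, $\psi_{\ell,k}=2^{\ell/2}\psi(2^\ell\cdot-k)$, 1-periodized ($f^{\rm per}(x)=\sum_{j\in\mathbb Z}f(x+j)$) on $(0,1)$. Set $\vartheta_{\ell,k,0}=\varphi_{\ell,k}$, $\vartheta_{\ell,k,1}=\psi_{\ell,k}$, and $\psi^{\rm iso}_{\ell,\mathbf k,\mathbf e}(\mathbf x)=\prod_{j=1}^n\vartheta_{\ell,k_j,e_j}(x_j)$. $\xi_{\mathbf q}(\mathbf x)=e^{2\pi i\mathbf q\cdot\mathbf x}$. Notation: $\mathrm{supp}(\mathbf x)=\{j:x_j\ne0\}$, $\|\mathbf q\|_0=|\mathrm{supp}(\mathbf q)|$, $\widehat{\mathbf x}=\mathbf x|_{\mathrm{supp}(\mathbf q)}$ (and $\widehat{\boldsymbol\gamma}$ is $\boldsymbol\gamma$ indexed by $\mathrm{supp}(\mathbf q)$), $|\mathbf x|^{\mathbf y}=\prod_j|x_j|^{y_j}$, $\mathbf 2=(2,\dots,2)$, $[n]=\{1,\dots,n\}$. *)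

theory Defs
  imports "HOL-Analysis.Analysis" "HOL-Probability.Probability"
begin

text \<open>Points of (0,1)^n are represented as functions nat => real, coordinates j < n.\<close>

definition hat :: "real \<Rightarrow> real" where
  "hat x = max 0 (1 - \<bar>x\<bar>)"

definition bcoef :: "int \<Rightarrow> real" where
  "bcoef j = (if j = -1 then 1/4 else if j = 0 then 1/2 else if j = 1 then -3/2
              else if j = 2 then 1/2 else if j = 3 then 1/4 else 0)"

definition wav :: "real \<Rightarrow> real" where
  "wav x = (\<Sum>j\<in>{-1..3::int}. bcoef j * hat (2 * x - of_int j))"

definition periodize :: "(real \<Rightarrow> real) \<Rightarrow> real \<Rightarrow> real" where
  "periodize f x = (\<Sum>\<^sub>\<infinity> j::int. f (x + of_int j))"

text \<open>theta l k 0 = periodized phi_{l,k};  theta l k 1 = periodized psi_{l,k}\<close>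
definition theta :: "nat \<Rightarrow> int \<Rightarrow> nat \<Rightarrow> real \<Rightarrow> real" where
  "theta l k e = periodize (\<lambda>x. 2 powr (real l / 2) *
      (if e = 0 then hat else wav) (2 ^ l * x - of_int k))"

definition psi_iso :: "nat \<Rightarrow> nat \<Rightarrow> (nat \<Rightarrow> int) \<Rightarrow> (nat \<Rightarrow> nat) \<Rightarrow> (nat \<Rightarrow> real) \<Rightarrow> real" where
  "psi_iso n l k e x = (\<Prod>j<n. theta l (k j) (e j) (x j))"

definition xi :: "nat \<Rightarrow> (nat \<Rightarrow> int) \<Rightarrow> (nat \<Rightarrow> real) \<Rightarrow> complex" where
  "xi n q x = exp (2 * pi * \<i> * complex_of_real (\<Sum>j<n. real_of_int (q j) * x j))"

text \<open>Classical partial derivative in direction j where it exists, 0 elsewhere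
  (agrees a.e. with the weak derivative for the functions considered).\<close>
definition pd :: "nat \<Rightarrow> ((nat \<Rightarrow> real) \<Rightarrow> complex) \<Rightarrow> (nat \<Rightarrow> real) \<Rightarrow> complex" where
  "pd j u x = (if (\<exists>D. ((\<lambda>t. u (x(j := t))) has_vector_derivative D) (at (x j)))
               then vector_derivative (\<lambda>t. u (x(j := t))) (at (x j)) else 0)"

definition cube_measure :: "nat \<Rightarrow> (nat \<Rightarrow> real) measure" where
  "cube_measure n = PiM {..<n} (\<lambda>_. lborel)"

definition cube :: "nat \<Rightarrow> (nat \<Rightarrow> real) set" where
  "cube n = PiE {..<n} (\<lambda>_. {0<..<1})"

definition ip :: "nat \<Rightarrow> ((nat \<Rightarrow> real) \<Rightarrow> complex) \<Rightarrow> ((nat \<Rightarrow> real) \<Rightarrow> complex) \<Rightarrow> complex" where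
  "ip n u v = (LINT x:cube n|cube_measure n. u x * cnj (v x))"

definition gip :: "nat \<Rightarrow> ((nat \<Rightarrow> real) \<Rightarrow> complex) \<Rightarrow> ((nat \<Rightarrow> real) \<Rightarrow> complex) \<Rightarrow> complex" where
  "gip n u v = (LINT x:cube n|cube_measure n. (\<Sum>j<n. pd j u x * cnj (pd j v x)))"

definition dirder :: "nat \<Rightarrow> (nat \<Rightarrow> real) \<Rightarrow> ((nat \<Rightarrow> real) \<Rightarrow> complex) \<Rightarrow> (nat \<Rightarrow> real) \<Rightarrow> complex" where
  "dirder n \<beta> u x = (\<Sum>j<n. complex_of_real (\<beta> j) * pd j u x)"

definition supp_v :: "nat \<Rightarrow> (nat \<Rightarrow> 'a::zero) \<Rightarrow> nat set" where
  "supp_v n x = {j. j < n \<and> x j \<noteq> 0}"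

definition zero_v :: "nat \<Rightarrow> (nat \<Rightarrow> 'a::zero) \<Rightarrow> nat set" where
  "zero_v n x = {..<n} - supp_v n x"

definition PSI :: "nat \<Rightarrow> nat \<Rightarrow> (nat \<Rightarrow> int) \<Rightarrow> (nat \<Rightarrow> nat) \<Rightarrow> (nat \<Rightarrow> real) \<Rightarrow> complex" where
  "PSI n l k e x = complex_of_real (psi_iso n l k e x)"

definition bnd :: "nat \<Rightarrow> nat \<Rightarrow> (nat \<Rightarrow> int) \<Rightarrow> (nat \<Rightarrow> real) \<Rightarrow> real" where
  "bnd n l q \<gamma> = 2 powr ((- real n / 2 + 2 * real (card (supp_v n q))
       - (\<Sum>j\<in>supp_v n q. \<gamma> j)) * real l)
     * (\<Prod>j\<in>supp_v n q. \<bar>real_of_int (q j)\<bar> powr (\<gamma> j - 2))"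

end

theory Submission
  imports Defs
begin

definition dhat :: "real \<Rightarrow> real" where
  "dhat x = (if -1 < x \<and> x < 0 then 1 else if 0 < x \<and> x < 1 then -1 else 0)"

lemma hat_nonneg: "0 \<le> hat x" by (simp add: hat_def)

lemma hat_le1: "hat x \<le> 1" by (simp add: hat_def)

lemma hat_zero: "x \<le> -1 \<or> 1 \<le> x \<Longrightarrow> hat x = 0" by (auto simp: hat_def)

lemma hat_neg: "-1 \<le> x \<Longrightarrow> x \<le> 0 \<Longrightarrow> hat x = 1 + x" by (auto simp: hat_def)
lemma hat_pos: "0 \<le> x \<Longrightarrow> x \<le> 1 \<Longrightarrow> hat x = 1 - x" by (auto simp: hat_def)

lemma continuous_hat: "continuous_on UNIV hat"
  unfolding hat_def by (intro continuous_intros)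

lemma hat_deriv:
  assumes "x \<notin> {-1,0,1}"
  shows "(hat has_real_derivative dhat x) (at x)"
proof -
  consider "x < -1" | "-1 < x \<and> x < 0" | "0 < x \<and> x < 1" | "1 < x" using assms by force
  then show ?thesis
  proof cases
    case 1
    show ?thesis
      by (rule has_field_derivative_transform_within_open[where f="\<lambda>_. 0" and S="{..< -1}"])
         (use 1 in \<open>auto simp: dhat_def hat_def intro!: derivative_eq_intros\<close>)
  next
    case 2
    show ?thesis
      by (rule has_field_derivative_transform_within_open[where f="\<lambda>x. 1 + x" and S="{-1<..<0}"])
         (use 2 in \<open>auto simp: dhat_def hat_def intro!: derivative_eq_intros\<close>)
  next
    case 3
    show ?thesis
      by (rule has_field_derivative_transform_within_open[where f="\<lambda>x. 1 - x" and S="{0<..<1}"])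
         (use 3 in \<open>auto simp: dhat_def hat_def intro!: derivative_eq_intros\<close>)
  next
    case 4
    show ?thesis
      by (rule has_field_derivative_transform_within_open[where f="\<lambda>_. 0" and S="{1<..}"])
         (use 4 in \<open>auto simp: dhat_def hat_def intro!: derivative_eq_intros\<close>)
  qed
qed

lemma dhat_bound: "\<bar>dhat x\<bar> \<le> 1" by (simp add: dhat_def)

lemma dhat_measurable[measurable]: "dhat \<in> borel_measurable borel"
  unfolding dhat_def by measurable

lemma hat_measurable[measurable]: "hat \<in> borel_measurable borel"
  by (simp add: borel_measurable_continuous_onI continuous_hat)


definition ee :: "real \<Rightarrow> real \<Rightarrow> complex" where
  "ee w s = exp (- (\<i> * complex_of_real (w * s)))"

lemma ee_alt: "ee w s = exp ((- \<i> * of_real w) * of_real s)"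
  by (simp add: ee_def mult.assoc)

lemma norm_ee[simp]: "norm (ee w s) = 1"
  by (simp add: ee_def norm_exp_eq_Re)

lemma antider_c:
  fixes c A B :: complex
  assumes "c \<noteq> 0"
  shows "((\<lambda>s. exp (c * of_real s) * ((A + B * of_real s) / c - B / c^2)) has_vector_derivative
          exp (c * of_real s) * (A + B * of_real s)) (at s within S)"
proof -
  have "((\<lambda>z. exp (c * z) * ((A + B * z) / c - B / c^2)) has_field_derivative
          exp (c * of_real s) * (A + B * of_real s)) (at (of_real s))"
    using assms by (auto intro!: derivative_eq_intros simp: field_simps power2_eq_square)
  then show ?thesis by (rule has_vector_derivative_real_field)
qed

lemma atom_int_0:
  assumes a: "a > 0"
  shows "((\<lambda>s. hat (a * s - d)) has_integral 1 / a) UNIV"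
proof -
  have i1: "((\<lambda>s. hat (a * s - d)) has_integral 1/(2*a)) {(d-1)/a..d/a}"
  proof -
    have "((\<lambda>s. a * s - d + 1) has_integral ((a * (d/a) - d + 1)^2/(2*a) - (a * ((d-1)/a) - d + 1)^2/(2*a))) {(d-1)/a..d/a}"
      apply (rule fundamental_theorem_of_calculus)
      using a apply (simp add: field_simps)
      apply (rule has_real_derivative_iff_has_vector_derivative[THEN iffD1])
      using a by (auto intro!: derivative_eq_intros simp: field_simps power2_eq_square)
    moreover have "(a * (d/a) - d + 1)^2/(2*a) - (a * ((d-1)/a) - d + 1)^2/(2*a) = 1/(2*a)"
      using a by (simp add: field_simps)
    ultimately have "((\<lambda>s. a * s - d + 1) has_integral 1/(2*a)) {(d-1)/a..d/a}" by simp
    moreover have "a * s - d + 1 = hat (a * s - d)" if "s \<in> {(d-1)/a..d/a}" for s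
      using that a by (subst hat_neg) (auto simp: field_simps)
    ultimately show ?thesis by (rule has_integral_eq[rotated]) 
  qed
  have i2: "((\<lambda>s. hat (a * s - d)) has_integral 1/(2*a)) {d/a..(d+1)/a}"
  proof -
    have "((\<lambda>s. 1 + d - a * s) has_integral ((0 - (1 + d - a * ((d+1)/a))^2/(2*a)) - (0 - (1 + d - a * (d/a))^2/(2*a)))) {d/a..(d+1)/a}"
      apply (rule fundamental_theorem_of_calculus)
      using a apply (simp add: field_simps)
      apply (rule has_real_derivative_iff_has_vector_derivative[THEN iffD1])
      using a by (auto intro!: derivative_eq_intros simp: field_simps power2_eq_square)
    moreover have "(0 - (1 + d - a * ((d+1)/a))^2/(2*a)) - (0 - (1 + d - a * (d/a))^2/(2*a)) = 1/(2*a)"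
      using a by (simp add: field_simps)
    ultimately have "((\<lambda>s. 1 + d - a * s) has_integral 1/(2*a)) {d/a..(d+1)/a}" by simp
    moreover have "1 + d - a * s = hat (a * s - d)" if "s \<in> {d/a..(d+1)/a}" for s
      using that a by (subst hat_pos) (auto simp: field_simps)
    ultimately show ?thesis by (rule has_integral_eq[rotated]) 
  qed
  have "((\<lambda>s. hat (a * s - d)) has_integral 1/(2*a) + 1/(2*a)) {(d-1)/a..(d+1)/a}"
    by (rule has_integral_combine[OF _ _ i1 i2]) (use a in \<open>auto simp: field_simps\<close>)
  then have "((\<lambda>s. hat (a * s - d)) has_integral 1/a) {(d-1)/a..(d+1)/a}" by simp
  then show ?thesis
    apply (rule has_integral_on_superset)
     apply (rule hat_zero)
    using a by (auto simp: field_simps)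
qed

lemma atom_bound1:
  assumes a: "a > 0" and I: "((\<lambda>s. of_real (hat (a * s - d)) * ee w s) has_integral V) UNIV"
  shows "norm V \<le> 1 / a"
  using has_integral_norm_bound_integral_component[OF I atom_int_0[OF a, of d], of 1]
  by (simp add: norm_mult hat_nonneg)

lemma atom_int:
  assumes a: "a > 0" and w: "w \<noteq> 0"
  shows "\<exists>V. ((\<lambda>s. of_real (hat (a * s - d)) * ee w s) has_integral V) UNIV \<and> norm V \<le> 4 * a / w^2"
proof -
  define c where "c = - \<i> * complex_of_real w"
  have c0: "c \<noteq> 0" using w by (simp add: c_def)
  have ncc: "norm (c^2) = w^2" by (simp add: c_def norm_power norm_mult)
  define P where "P A B s = exp (c * of_real s) * ((A + B * of_real s) / c - B / c^2)" for A B :: complex and s :: real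
  have eeP: "ee w s = exp (c * of_real s)" for s by (simp add: ee_alt c_def)
  have i1: "((\<lambda>s. of_real (hat (a * s - d)) * ee w s) has_integral
      P (of_real (1-d)) (of_real a) (d/a) - P (of_real (1-d)) (of_real a) ((d-1)/a)) {(d-1)/a..d/a}"
  proof -
    have "((\<lambda>s. exp (c * of_real s) * (of_real (1-d) + of_real a * of_real s)) has_integral
      P (of_real (1-d)) (of_real a) (d/a) - P (of_real (1-d)) (of_real a) ((d-1)/a)) {(d-1)/a..d/a}"
      unfolding P_def
      apply (rule fundamental_theorem_of_calculus)
      using a apply (simp add: field_simps)
      by (rule antider_c[OF c0])
    moreover have "exp (c * of_real s) * (of_real (1-d) + of_real a * of_real s) = of_real (hat (a * s - d)) * ee w s"
      if "s \<in> {(d-1)/a..d/a}" for s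
    proof -
      have "hat (a * s - d) = (1 - d) + a * s"
        using that a by (subst hat_neg) (auto simp: field_simps)
      then show ?thesis by (simp add: eeP)
    qed
    ultimately show ?thesis by (rule has_integral_eq[rotated])
  qed
  have i2: "((\<lambda>s. of_real (hat (a * s - d)) * ee w s) has_integral
      P (of_real (1+d)) (- of_real a) ((d+1)/a) - P (of_real (1+d)) (- of_real a) (d/a)) {d/a..(d+1)/a}"
  proof -
    have "((\<lambda>s. exp (c * of_real s) * (of_real (1+d) + (- of_real a) * of_real s)) has_integral
      P (of_real (1+d)) (- of_real a) ((d+1)/a) - P (of_real (1+d)) (- of_real a) (d/a)) {d/a..(d+1)/a}"
      unfolding P_def
      apply (rule fundamental_theorem_of_calculus)
      using a apply (simp add: field_simps)
      by (rule antider_c[OF c0])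
    moreover have "exp (c * of_real s) * (of_real (1+d) + (- of_real a) * of_real s) = of_real (hat (a * s - d)) * ee w s"
      if "s \<in> {d/a..(d+1)/a}" for s
    proof -
      have "hat (a * s - d) = (1 + d) + (- a) * s"
        using that a by (subst hat_pos) (auto simp: field_simps)
      then show ?thesis by (simp add: eeP)
    qed
    ultimately show ?thesis by (rule has_integral_eq[rotated])
  qed
  define V where "V = P (of_real (1-d)) (of_real a) (d/a) - P (of_real (1-d)) (of_real a) ((d-1)/a)
     + (P (of_real (1+d)) (- of_real a) ((d+1)/a) - P (of_real (1+d)) (- of_real a) (d/a))"
  have "((\<lambda>s. of_real (hat (a * s - d)) * ee w s) has_integral V) {(d-1)/a..(d+1)/a}"
    unfolding V_def by (rule has_integral_combine[OF _ _ i1 i2]) (use a in \<open>auto simp: field_simps\<close>)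
  then have iU: "((\<lambda>s. of_real (hat (a * s - d)) * ee w s) has_integral V) UNIV"
    apply (rule has_integral_on_superset)
     apply (subst hat_zero)
    using a by (auto simp: field_simps)
  define X where "X = exp (c * of_real ((d-1)/a))"
  define Y where "Y = exp (c * of_real ((d+1)/a))"
  define Z where "Z = exp (c * of_real (d/a))"
  have e1: "of_real (1-d) + of_real a * of_real (d/a) = (1::complex)"
  proof -
    have "complex_of_real ((1-d) + a*(d/a)) = 1" using a by simp
    then show ?thesis by (simp only: of_real_add of_real_mult)
  qed
  have e2: "of_real (1-d) + of_real a * of_real ((d-1)/a) = (0::complex)"
  proof -
    have "complex_of_real ((1-d) + a*((d-1)/a)) = 0" using a by (simp add: field_simps)
    then show ?thesis by (simp only: of_real_add of_real_mult)
  qed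
  have e3: "of_real (1+d) + (- of_real a) * of_real ((d+1)/a) = (0::complex)"
  proof -
    have "complex_of_real ((1+d) + (-a)*((d+1)/a)) = 0" using a by (simp add: field_simps)
    then show ?thesis by (simp only: of_real_add of_real_mult of_real_minus)
  qed
  have e4: "of_real (1+d) + (- of_real a) * of_real (d/a) = (1::complex)"
  proof -
    have "complex_of_real ((1+d) + (-a)*(d/a)) = 1" using a by (simp add: field_simps)
    then show ?thesis by (simp only: of_real_add of_real_mult of_real_minus)
  qed
  have alg: "Z*(1/c - a'/c^2) - X*(0/c - a'/c^2) + (Y*(0/c - (- a')/c^2) - Z*(1/c - (- a')/c^2)) = a'/c^2*(X+Y-2*Z)"
    for a' :: complex
    by (simp add: algebra_simps diff_divide_distrib add_divide_distrib)
  have "V = of_real a / c^2 * (X + Y - 2 * Z)"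
    unfolding V_def P_def X_def[symmetric] Y_def[symmetric] Z_def[symmetric] e1 e2 e3 e4
    by (rule alg)
  moreover have "norm (X + Y - 2 * Z) \<le> 4"
  proof -
    have nX: "norm X = 1" "norm Y = 1" "norm Z = 1"
      by (simp_all add: X_def Y_def Z_def c_def norm_exp_eq_Re)
    have "norm (X + Y - 2 * Z) \<le> norm (X + Y) + norm (2 * Z)" by (rule norm_triangle_ineq4)
    moreover have "norm (X + Y) \<le> norm X + norm Y" by (rule norm_triangle_ineq)
    ultimately show ?thesis using nX by (simp add: norm_mult)
  qed
  ultimately have "norm V = a / w^2 * norm (X + Y - 2 * Z)"
    using a by (simp add: norm_mult norm_divide ncc)
  also have "\<dots> \<le> a / w^2 * 4"
    by (rule mult_left_mono) (use \<open>norm (X + Y - 2 * Z) \<le> 4\<close> a in auto)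
  finally have "norm V \<le> 4 * a / w^2" by (simp add: algebra_simps)
  with iU show ?thesis by blast
qed

lemma atom_int2:
  assumes a: "a > 0" and w: "w \<noteq> 0"
  shows "\<exists>V. ((\<lambda>s. of_real (hat (a * s - d)) * ee w s) has_integral V) UNIV \<and> norm V \<le> 4 * a / w^2 \<and> norm V \<le> 1 / a"
  using atom_int[OF a w, of d] atom_bound1[OF a] by blast

lemma atom_int_0c:
  assumes a: "a > 0"
  shows "((\<lambda>s. of_real (hat (a * s - d)) * ee 0 s) has_integral complex_of_real (1 / a)) UNIV"
proof -
  have "(of_real \<circ> (\<lambda>s. hat (a * s - d)) has_integral complex_of_real (1 / a)) UNIV"
    by (rule has_integral_linear[OF atom_int_0[OF a] bounded_linear_of_real])
  then show ?thesis by (simp add: ee_def o_def)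
qed


definition nice :: "(real \<Rightarrow> real) \<Rightarrow> (real \<Rightarrow> real) \<Rightarrow> real set \<Rightarrow> bool" where
 "nice f f' K \<longleftrightarrow> finite K \<and> continuous_on UNIV f \<and> (\<forall>x. x \<notin> K \<longrightarrow> (f has_real_derivative f' x) (at x))
     \<and> f' \<in> borel_measurable borel \<and> (\<exists>B. \<forall>x. \<bar>f' x\<bar> \<le> B)"

lemma nice_hat: "nice hat dhat {-1,0,1}"
  unfolding nice_def using continuous_hat hat_deriv dhat_measurable dhat_bound by blast

lemma nice_affine:
  assumes a: "a \<noteq> 0" and n: "nice f f' K"
  shows "nice (\<lambda>x. f (a*x + b)) (\<lambda>x. a * f' (a*x+b)) ((\<lambda>y. (y - b)/a) ` K)"
proof -
  from n have fin: "finite K" and c: "continuous_on UNIV f"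
    and d: "\<And>x. x \<notin> K \<Longrightarrow> (f has_real_derivative f' x) (at x)"
    and m: "f' \<in> borel_measurable borel" and B: "\<exists>B. \<forall>x. \<bar>f' x\<bar> \<le> B"
    unfolding nice_def by auto
  have "continuous_on UNIV (\<lambda>x. f (a*x + b))"
    by (rule continuous_on_compose2[OF c]) (auto intro!: continuous_intros)
  moreover have "((\<lambda>x. f (a*x + b)) has_real_derivative a * f' (a*x+b)) (at x)"
    if "x \<notin> (\<lambda>y. (y - b)/a) ` K" for x
  proof -
    have "a*x+b \<notin> K"
    proof
      assume "a*x+b \<in> K"
      then have "(a*x+b - b)/a \<in> (\<lambda>y. (y - b)/a) ` K" by blast
      with that a show False by simp
    qed
    then have "(f has_real_derivative f' (a*x+b)) (at (a*x+b))" by (rule d)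
    moreover have g: "((\<lambda>x. a*x+b) has_real_derivative a) (at x)" by (auto intro!: derivative_eq_intros)
    ultimately have "((\<lambda>x. f (a*x+b)) has_real_derivative f' (a*x+b) * a) (at x)"
      by (rule DERIV_chain2[where f=f and g="\<lambda>x. a*x+b"])
    then show ?thesis by (simp add: mult.commute)
  qed
  moreover have "(\<lambda>x. a * f' (a*x+b)) \<in> borel_measurable borel"
    using m by measurable
  moreover have "\<exists>B. \<forall>x. \<bar>a * f' (a*x+b)\<bar> \<le> B"
  proof -
    from B obtain B where "\<forall>x. \<bar>f' x\<bar> \<le> B" by auto
    then have "\<forall>x. \<bar>a * f' (a*x+b)\<bar> \<le> \<bar>a\<bar> * B" by (simp add: abs_mult mult_left_mono)
    then show ?thesis by blast
  qed
  ultimately show ?thesis using fin unfolding nice_def by blast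
qed

lemma nice_add:
  assumes "nice f f' K" "nice g g' L"
  shows "nice (\<lambda>x. f x + g x) (\<lambda>x. f' x + g' x) (K \<union> L)"
proof -
  from assms obtain B1 B2 where "\<forall>x. \<bar>f' x\<bar> \<le> B1" "\<forall>x. \<bar>g' x\<bar> \<le> B2" unfolding nice_def by auto
  then have "\<forall>x. \<bar>f' x + g' x\<bar> \<le> B1 + B2" by (metis abs_triangle_ineq add_mono order_trans)
  then show ?thesis using assms unfolding nice_def
    by (auto intro!: continuous_intros derivative_eq_intros)
qed

lemma nice_cmult:
  assumes "nice f f' K"
  shows "nice (\<lambda>x. c * f x) (\<lambda>x. c * f' x) K"
proof -
  from assms obtain B where "\<forall>x. \<bar>f' x\<bar> \<le> B" unfolding nice_def by auto
  then have "\<forall>x. \<bar>c * f' x\<bar> \<le> \<bar>c\<bar> * B" by (simp add: abs_mult mult_left_mono)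
  then show ?thesis using assms unfolding nice_def
    by (auto intro!: continuous_intros derivative_eq_intros)
qed

lemma nice_zero: "nice (\<lambda>x. 0) (\<lambda>x. 0) {}"
  unfolding nice_def by (auto intro!: derivative_eq_intros)

lemma nice_sum:
  assumes "finite I" "\<And>i. i \<in> I \<Longrightarrow> nice (f i) (f' i) (K i)"
  shows "nice (\<lambda>x. \<Sum>i\<in>I. f i x) (\<lambda>x. \<Sum>i\<in>I. f' i x) (\<Union>i\<in>I. K i)"
  using assms
proof (induction I rule: finite_induct)
  case empty
  then show ?case using nice_zero by simp
next
  case (insert i I)
  have "nice (\<lambda>x. f i x + (\<Sum>i\<in>I. f i x)) (\<lambda>x. f' i x + (\<Sum>i\<in>I. f' i x)) (K i \<union> (\<Union>i\<in>I. K i))"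
    by (rule nice_add) (use insert in auto)
  then show ?case using insert by simp
qed

lemma wav_alt: "wav x = (\<Sum>m\<in>{-1..3::int}. bcoef m * hat (2 * x + (- of_int m)))"
  unfolding wav_def by simp

definition dwav :: "real \<Rightarrow> real" where
  "dwav x = (\<Sum>m\<in>{-1..3::int}. bcoef m * (2 * dhat (2 * x + (- of_int m))))"

definition Kwav :: "real set" where
  "Kwav = (\<Union>m\<in>{-1..3::int}. (\<lambda>y. (y - (- of_int m))/2) ` {-1,0,1})"

lemma nice_wav: "nice wav dwav Kwav"
proof -
  have "nice (\<lambda>x. \<Sum>m\<in>{-1..3::int}. bcoef m * hat (2 * x + (- of_int m)))
             (\<lambda>x. \<Sum>m\<in>{-1..3::int}. bcoef m * (2 * dhat (2 * x + (- of_int m)))) Kwav"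
    unfolding Kwav_def
    by (rule nice_sum, simp, rule nice_cmult, rule nice_affine, simp, rule nice_hat)
  moreover have "(\<lambda>x. \<Sum>m\<in>{-1..3::int}. bcoef m * hat (2 * x + (- of_int m))) = wav"
    using wav_alt by auto
  ultimately show ?thesis unfolding dwav_def by simp
qed


definition Fe :: "nat \<Rightarrow> real \<Rightarrow> real" where "Fe e = (if e = 0 then hat else wav)"

definition fe :: "nat \<Rightarrow> int \<Rightarrow> nat \<Rightarrow> real \<Rightarrow> real" where
  "fe l k e s = 2 powr (real l / 2) * Fe e (2 ^ l * s - of_int k)"

definition ge :: "nat \<Rightarrow> int \<Rightarrow> nat \<Rightarrow> real \<Rightarrow> real" where
  "ge l k e t = fe l k e (t - 1) + fe l k e t + fe l k e (t + 1)"

lemma theta_fe: "theta l k e = periodize (fe l k e)"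
  unfolding theta_def fe_def Fe_def by (simp add: if_distrib)

lemma hat_supp: "hat y \<noteq> 0 \<Longrightarrow> -1 < y \<and> y < 1"
  by (smt (verit) hat_zero)

lemma Fe_supp: "Fe e y \<noteq> 0 \<Longrightarrow> -1 < y \<and> y < 2"
proof (cases "e = 0")
  case True
  assume "Fe e y \<noteq> 0"
  with True show ?thesis using hat_supp[of y] by (auto simp: Fe_def)
next
  case False
  assume "Fe e y \<noteq> 0"
  with False have "wav y \<noteq> 0" by (simp add: Fe_def)
  then obtain m where m: "m \<in> {-1..3::int}" "hat (2 * y - of_int m) \<noteq> 0"
    unfolding wav_def by (metis (no_types, lifting) mult_zero_right sum.neutral)
  from hat_supp[OF m(2)] m(1) show ?thesis by auto
qed

lemma fe_supp:
  assumes k: "0 \<le> k" "k < 2 ^ l" and nz: "fe l k e s \<noteq> 0"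
  shows "-1 < s \<and> s < 2"
proof -
  from nz have "Fe e (2 ^ l * s - of_int k) \<noteq> 0" by (auto simp: fe_def)
  from Fe_supp[OF this] have h: "-1 < 2 ^ l * s - of_int k" "2 ^ l * s - of_int k < 2" by auto
  have k1: "k + 1 \<le> 2 ^ l" using k by simp
  then have k1r: "real_of_int k + 1 \<le> 2 ^ l"
    using of_int_le_iff[of "k+1" "2^l", where 'a=real] by simp
  have p: "(1::real) \<le> 2 ^ l" by simp
  have "2 ^ l * s > of_int k - 1" using h by simp
  moreover have "of_int k - 1 \<ge> - (2 ^ l :: real)"
  proof -
    have "real_of_int k \<ge> 0" using k by simp
    then show ?thesis using p by linarith
  qed
  ultimately have "(2 ^ l) * (-1::real) < 2 ^ l * s" by simp
  then have s1: "-1 < s" by (simp only: mult_less_cancel_left_pos[OF zero_less_power[of 2 l]] zero_less_numeral)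
  have "2 ^ l * s < of_int k + 2" using h by simp
  also have "\<dots> \<le> 2 ^ l * (2::real)" using k1r p by linarith
  finally have "s < 2" by (simp only: mult_less_cancel_left_pos[OF zero_less_power[of 2 l]] zero_less_numeral)
  with s1 show ?thesis by simp
qed

lemma theta_eq_ge:
  assumes k: "0 \<le> k" "k < 2 ^ l" and t: "0 < t" "t < 1"
  shows "theta l k e t = ge l k e t"
proof -
  have "theta l k e t = (\<Sum>\<^sub>\<infinity> j::int. fe l k e (t + of_int j))"
    by (simp add: theta_fe periodize_def)
  also have "\<dots> = (\<Sum>\<^sub>\<infinity> j\<in>{-1,0,1::int}. fe l k e (t + of_int j))"
  proof (rule infsum_cong_neutral)
    fix j :: int assume j: "j \<in> UNIV - {-1,0,1}"
    show "fe l k e (t + of_int j) = 0"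
    proof (rule ccontr)
      assume "fe l k e (t + of_int j) \<noteq> 0"
      from fe_supp[OF k this] t have "-2 < (of_int j::real)" "of_int j < (2::real)" by auto
      then have "-2 < j" "j < 2" by linarith+
      with j show False by auto
    qed
  qed auto
  also have "\<dots> = ge l k e t"
    by (subst infsum_finite) (auto simp: ge_def)
  finally show ?thesis .
qed

lemma ge_per:
  assumes k: "0 \<le> k" "k < 2 ^ l"
  shows "ge l k e 1 = ge l k e 0"
proof -
  have "fe l k e 2 = 0" using fe_supp[OF k, of e 2] by auto
  moreover have "fe l k e (-1) = 0" using fe_supp[OF k, of e "-1"] by auto
  ultimately show ?thesis by (simp add: ge_def)
qed

lemma nice_Fe: "\<exists>F' K. nice (Fe e) F' K"
  unfolding Fe_def using nice_hat nice_wav by auto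

lemma nice_fe: "\<exists>F' K. nice (fe l k e) F' K"
proof -
  obtain F' K where n: "nice (Fe e) F' K" using nice_Fe by blast
  have "nice (\<lambda>s. 2 powr (real l / 2) * Fe e (2 ^ l * s + (- of_int k)))
       (\<lambda>s. 2 powr (real l / 2) * (2 ^ l * F' (2 ^ l * s + (- of_int k)))) ((\<lambda>y. (y - (- of_int k))/2 ^ l) ` K)"
    by (rule nice_cmult, rule nice_affine[OF _ n]) simp
  moreover have "(\<lambda>s. 2 powr (real l / 2) * Fe e (2 ^ l * s + (- of_int k))) = fe l k e"
    by (auto simp: fe_def)
  ultimately show ?thesis by metis
qed

lemma nice_ge: "\<exists>G' K. nice (ge l k e) G' K"
proof -
  obtain F' K where n: "nice (fe l k e) F' K" using nice_fe by blast
  have a: "nice (\<lambda>t. fe l k e (1 * t + b)) (\<lambda>t. 1 * F' (1 * t + b)) ((\<lambda>y. (y - b)/1) ` K)" for b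
    by (rule nice_affine[OF _ n]) simp
  note nice_add[OF nice_add[OF a[of "-1"] a[of 0]] a[of 1]]
  moreover have "(\<lambda>t. fe l k e (1 * t + -1) + fe l k e (1 * t + 0) + fe l k e (1 * t + 1)) = ge l k e"
    by (auto simp: ge_def)
  ultimately show ?thesis by metis
qed


lemma int_m1_3: "{-1..3::int} = {-1,0,1,2,3}" by auto

lemma sum_bcoef_abs: "(\<Sum>m\<in>{-1..3::int}. \<bar>bcoef m\<bar>) = 3"
  unfolding int_m1_3 by (simp add: bcoef_def)

lemma sum_bcoef: "(\<Sum>m\<in>{-1..3::int}. bcoef m) = 0"
  unfolding int_m1_3 by (simp add: bcoef_def)

lemma fe_wav: "e \<noteq> 0 \<Longrightarrow> fe l k e s = 2 powr (real l / 2) * (\<Sum>m\<in>{-1..3::int}. bcoef m * hat ((2 * 2 ^ l) * s - of_int (2 * k + m)))"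
  unfolding fe_def Fe_def wav_def by (simp add: algebra_simps)

lemma fe_hat: "e = 0 \<Longrightarrow> fe l k e s = 2 powr (real l / 2) * hat (2 ^ l * s - of_int k)"
  unfolding fe_def Fe_def by simp

lemma fe_fourier_nz:
  assumes w: "w \<noteq> 0"
  shows "\<exists>V. ((\<lambda>s. of_real (fe l k e s) * ee w s) has_integral V) UNIV \<and>
     norm V \<le> 24 * 2 powr (real l / 2) * 2 ^ l / w^2 \<and> norm V \<le> 2 * 2 powr (real l / 2) / 2 ^ l"
proof (cases "e = 0")
  case True
  obtain V0 where V0: "((\<lambda>s. of_real (hat (2 ^ l * s - of_int k)) * ee w s) has_integral V0) UNIV"
     "norm V0 \<le> 4 * 2 ^ l / w^2" "norm V0 \<le> 1 / 2 ^ l"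
    using atom_int2[OF _ w, of "2 ^ l" "of_int k"] by auto
  have "((\<lambda>s. of_real (2 powr (real l / 2)) * (of_real (hat (2 ^ l * s - of_int k)) * ee w s)) has_integral
         of_real (2 powr (real l / 2)) * V0) UNIV"
    by (rule has_integral_mult_right[OF V0(1)])
  then have I: "((\<lambda>s. of_real (fe l k e s) * ee w s) has_integral of_real (2 powr (real l / 2)) * V0) UNIV"
    using True by (simp add: fe_hat mult.assoc)
  have r: "0 < 2 powr (real l / 2)" by simp
  have "norm (of_real (2 powr (real l / 2)) * V0) = 2 powr (real l / 2) * norm V0"
    by (simp add: norm_mult)
  moreover have "2 powr (real l / 2) * norm V0 \<le> 2 powr (real l / 2) * (4 * 2 ^ l / w^2)"
    using V0(2) r by (intro mult_left_mono) auto
  moreover have "2 powr (real l / 2) * (4 * 2 ^ l / w^2) \<le> 24 * 2 powr (real l / 2) * 2 ^ l / w^2"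
    using r by (simp add: divide_simps)
  moreover have "2 powr (real l / 2) * norm V0 \<le> 2 powr (real l / 2) * (1 / 2 ^ l)"
    using V0(3) r by (intro mult_left_mono) auto
  moreover have "2 powr (real l / 2) * (1 / 2 ^ l) \<le> 2 * 2 powr (real l / 2) / 2 ^ l"
    using r by (simp add: divide_simps)
  ultimately have "norm (of_real (2 powr (real l / 2)) * V0) \<le> 24 * 2 powr (real l / 2) * 2 ^ l / w^2"
      "norm (of_real (2 powr (real l / 2)) * V0) \<le> 2 * 2 powr (real l / 2) / 2 ^ l" by linarith+
  then show ?thesis using I by blast
next
  case False
  define Vm where "Vm m = integral UNIV (\<lambda>s. of_real (hat ((2 * 2 ^ l) * s - of_int (2 * k + m))) * ee w s)" for m :: int
  have Vm: "((\<lambda>s. of_real (hat ((2 * 2 ^ l) * s - of_int (2 * k + m))) * ee w s) has_integral Vm m) UNIV"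
      "norm (Vm m) \<le> 4 * (2 * 2 ^ l) / w^2"
      "norm (Vm m) \<le> 1 / (2 * 2 ^ l)" for m
  proof -
    obtain V where V: "((\<lambda>s. of_real (hat ((2 * 2 ^ l) * s - of_int (2 * k + m))) * ee w s) has_integral V) UNIV"
      "norm V \<le> 4 * (2 * 2 ^ l) / w^2" "norm V \<le> 1 / (2 * 2 ^ l)"
      using atom_int2[OF _ w, of "2 * 2 ^ l" "of_int (2 * k + m)"] by auto
    then have "Vm m = V" unfolding Vm_def by (simp add: integral_unique)
    with V show "((\<lambda>s. of_real (hat ((2 * 2 ^ l) * s - of_int (2 * k + m))) * ee w s) has_integral Vm m) UNIV"
      "norm (Vm m) \<le> 4 * (2 * 2 ^ l) / w^2"
      "norm (Vm m) \<le> 1 / (2 * 2 ^ l)" by auto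
  qed
  define r where "r = 2 powr (real l / 2)"
  have r: "0 < r" by (simp add: r_def)
  define V where "V = of_real r * (\<Sum>m\<in>{-1..3::int}. of_real (bcoef m) * Vm m)"
  have "((\<lambda>s. \<Sum>m\<in>{-1..3::int}. of_real (bcoef m) * (of_real (hat ((2 * 2 ^ l) * s - of_int (2 * k + m))) * ee w s))
     has_integral (\<Sum>m\<in>{-1..3::int}. of_real (bcoef m) * Vm m)) UNIV"
    by (rule has_integral_sum) (simp, rule has_integral_mult_right, rule Vm(1))
  from has_integral_mult_right[OF this, of "of_real r"]
  have I: "((\<lambda>s. of_real (fe l k e s) * ee w s) has_integral V) UNIV"
    using False by (simp add: fe_wav V_def r_def sum_distrib_left sum_distrib_right mult.assoc)
  have nS: "norm (\<Sum>m\<in>{-1..3::int}. of_real (bcoef m) * Vm m) \<le> (\<Sum>m\<in>{-1..3::int}. \<bar>bcoef m\<bar> * norm (Vm m))"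
    by (rule order_trans[OF norm_sum]) (simp add: norm_mult)
  have b1: "(\<Sum>m\<in>{-1..3::int}. \<bar>bcoef m\<bar> * norm (Vm m)) \<le> (\<Sum>m\<in>{-1..3::int}. \<bar>bcoef m\<bar> * (4 * (2 * 2 ^ l) / w^2))"
    by (intro sum_mono mult_left_mono Vm(2) abs_ge_zero)
  have b2: "(\<Sum>m\<in>{-1..3::int}. \<bar>bcoef m\<bar> * norm (Vm m)) \<le> (\<Sum>m\<in>{-1..3::int}. \<bar>bcoef m\<bar> * (1 / (2 * 2 ^ l)))"
    by (intro sum_mono mult_left_mono Vm(3) abs_ge_zero)
  have e1: "(\<Sum>m\<in>{-1..3::int}. \<bar>bcoef m\<bar> * (4 * (2 * 2 ^ l) / w^2)) = 24 * 2 ^ l / w^2"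
    unfolding int_m1_3 by (simp add: bcoef_def field_simps)
  have e2: "(\<Sum>m\<in>{-1..3::int}. \<bar>bcoef m\<bar> * (1 / (2 * 2 ^ l))) = 3 / (2 * 2 ^ l)"
    unfolding int_m1_3 by (simp add: bcoef_def field_simps)
  have nV: "norm V = r * norm (\<Sum>m\<in>{-1..3::int}. of_real (bcoef m) * Vm m)"
    using r by (simp add: V_def norm_mult)
  have "norm V \<le> r * (24 * 2 ^ l / w^2)"
    unfolding nV using nS b1 e1 r by (intro mult_left_mono) auto
  moreover have "norm V \<le> r * (3 / (2 * 2 ^ l))"
    unfolding nV using nS b2 e2 r by (intro mult_left_mono) auto
  moreover have "r * (3 / (2 * 2 ^ l)) \<le> 2 * r / 2 ^ l"
    using r by (simp add: divide_simps)
  moreover have "r * (24 * 2 ^ l / w^2) = 24 * r * 2 ^ l / w^2" by simp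
  ultimately have "norm V \<le> 24 * r * 2 ^ l / w^2" "norm V \<le> 2 * r / 2 ^ l" by linarith+
  then show ?thesis using I unfolding r_def by blast
qed

lemma fe_fourier_0:
  "((\<lambda>s. of_real (fe l k e s) * ee 0 s) has_integral
     of_real (if e = 0 then 2 powr (real l / 2) / 2 ^ l else 0)) UNIV"
proof (cases "e = 0")
  case True
  from has_integral_mult_right[OF atom_int_0c[of "2 ^ l" "of_int k"], of "of_real (2 powr (real l / 2))"]
  show ?thesis using True by (simp add: fe_hat mult.assoc)
next
  case False
  have "((\<lambda>s. \<Sum>m\<in>{-1..3::int}. of_real (bcoef m) * (of_real (hat ((2 * 2 ^ l) * s - of_int (2 * k + m))) * ee 0 s))
     has_integral (\<Sum>m\<in>{-1..3::int}. of_real (bcoef m) * of_real (1 / (2 * 2 ^ l)))) UNIV"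
    by (rule has_integral_sum) (simp, rule has_integral_mult_right, rule atom_int_0c, simp)
  moreover have "(\<Sum>m\<in>{-1..3::int}. of_real (bcoef m) * of_real (1 / (2 * 2 ^ l))) = (0::complex)"
    unfolding int_m1_3 by (simp add: bcoef_def field_simps)
  ultimately have "((\<lambda>s. \<Sum>m\<in>{-1..3::int}. of_real (bcoef m) * (of_real (hat ((2 * 2 ^ l) * s - of_int (2 * k + m))) * ee 0 s))
     has_integral 0) UNIV" by simp
  from has_integral_mult_right[OF this, of "of_real (2 powr (real l / 2))"]
  show ?thesis using False by (simp add: fe_wav sum_distrib_left sum_distrib_right mult.assoc)
qed


lemma ee_shift:
  assumes w: "w = 2 * pi * of_int q"
  shows "ee w (t + of_int j) = ee w t"
proof -
  have "ee w (t + of_int j) = ee w t * exp (- (\<i> * complex_of_real (w * of_int j)))"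
    unfolding ee_def by (simp add: distrib_left exp_add[symmetric] algebra_simps)
  moreover have "exp (- (\<i> * complex_of_real (w * of_int j))) = 1"
  proof -
    have eq: "- (\<i> * complex_of_real (w * of_int j)) = complex_of_real (2 * of_int (- q * j) * pi) * \<i>"
      using w by (simp add: algebra_simps)
    show ?thesis by (subst eq) (rule exp_integer_2pi, simp)
  qed
  ultimately show ?thesis by simp
qed

lemma has_integral_shift01:
  assumes "(f has_integral I) {of_int j..of_int j + 1::real}"
  shows "((\<lambda>t. f (t + of_int j)) has_integral I) {0..1}"
proof -
  have "((\<lambda>x. f (1 *\<^sub>R x + of_int j)) has_integral I /\<^sub>R 1 ^ DIM(real))
     (cbox ((of_int j - of_int j) /\<^sub>R 1) ((of_int j + 1 - of_int j) /\<^sub>R 1)) = (f has_integral I) (cbox (of_int j) (of_int j + 1))"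
    by (rule has_integral_affinity_iff) simp
  with assms show ?thesis by simp
qed

lemma ge_fourier:
  assumes k: "0 \<le> k" "k < 2 ^ l" and w: "w = 2 * pi * of_int q"
    and I: "((\<lambda>s. of_real (fe l k e s) * ee w s) has_integral V) UNIV"
  shows "((\<lambda>t. of_real (ge l k e t) * ee w t) has_integral V) {0..1}"
proof -
  define \<phi> where "\<phi> s = of_real (fe l k e s) * ee w s" for s
  have I': "(\<phi> has_integral V) UNIV" using I by (simp add: \<phi>_def[abs_def])
  have z: "\<phi> s = 0" if "s \<notin> {-1..2}" for s
  proof -
    have "fe l k e s = 0" using fe_supp[OF k, of e s] that by fastforce
    then show ?thesis by (simp add: \<phi>_def)
  qed
  define Ij where "Ij j = integral {of_int j..of_int j + 1} \<phi>" for j :: int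
  have Ij: "(\<phi> has_integral Ij j) {of_int j..of_int j + 1}" for j
    unfolding Ij_def
    by (rule integrable_integral, rule integrable_on_subinterval[of _ UNIV]) (use I' in auto)
  have "(\<phi> has_integral Ij (-1) + Ij 0) {-1..1}"
    using has_integral_combine[of "-1" 0 1 \<phi> "Ij (-1)" "Ij 0"] Ij[of "-1"] Ij[of 0] by simp
  then have "(\<phi> has_integral Ij (-1) + Ij 0 + Ij 1) {-1..2}"
    using has_integral_combine[of "-1" 1 2 \<phi> "Ij (-1) + Ij 0" "Ij 1"] Ij[of 1] by simp
  then have "(\<phi> has_integral Ij (-1) + Ij 0 + Ij 1) UNIV"
    by (rule has_integral_on_superset) (use z in auto)
  then have V: "V = Ij (-1) + Ij 0 + Ij 1" using I' by (rule has_integral_unique[rotated])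
  have s: "((\<lambda>t. \<phi> (t + of_int j)) has_integral Ij j) {0..1}" for j
    by (rule has_integral_shift01[OF Ij])
  have "((\<lambda>t. \<phi> (t + of_int (-1)) + \<phi> (t + of_int 0) + \<phi> (t + of_int 1)) has_integral Ij (-1) + Ij 0 + Ij 1) {0..1}"
    by (intro has_integral_add s)
  moreover have "\<phi> (t + of_int (-1)) + \<phi> (t + of_int 0) + \<phi> (t + of_int 1) = of_real (ge l k e t) * ee w t" for t
    unfolding \<phi>_def ee_shift[OF w] ge_def by (simp add: algebra_simps)
  ultimately show ?thesis using V by simp
qed

lemma has_vector_derivative_ee:
  "(ee w has_vector_derivative (- \<i> * of_real w) * ee w t) (at t within S)"
proof -
  have "((\<lambda>z. exp ((- \<i> * of_real w) * z)) has_field_derivative (- \<i> * of_real w) * exp ((- \<i> * of_real w) * of_real t)) (at (of_real t))"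
    by (auto intro!: derivative_eq_intros)
  from has_vector_derivative_real_field[OF this]
  show ?thesis by (simp add: ee_alt[abs_def] ee_alt)
qed

lemma continuous_on_ee: "continuous_on S (ee w)"
  unfolding ee_def by (intro continuous_intros)

lemma ge_deriv_int:
  assumes k: "0 \<le> k" "k < 2 ^ l" and w: "w = 2 * pi * of_int q"
    and n: "nice (ge l k e) G' K"
    and J: "((\<lambda>t. of_real (ge l k e t) * ee w t) has_integral J) {0..1}"
  shows "((\<lambda>t. of_real (G' t) * ee w t) has_integral (\<i> * of_real w) * J) {0..1}"
proof -
  from n have fin: "finite K" and c: "continuous_on UNIV (ge l k e)"
    and d: "\<And>x. x \<notin> K \<Longrightarrow> (ge l k e has_real_derivative G' x) (at x)"
    unfolding nice_def by auto
  define h where "h t = of_real (ge l k e t) * ee w t" for t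
  define h' where "h' t = of_real (ge l k e t) * ((- \<i> * of_real w) * ee w t) + of_real (G' t) * ee w t" for t
  have "(h' has_integral h 1 - h 0) {0..1}"
  proof (rule fundamental_theorem_of_calculus_interior_strong[OF fin])
    fix x assume "x \<in> {0<..<1} - K"
    then have "(ge l k e has_real_derivative G' x) (at x)" using d by auto
    then have "((\<lambda>t. of_real (ge l k e t)) has_vector_derivative of_real (G' x)) (at x)"
      by (rule has_vector_derivative_of_real)
    from has_vector_derivative_mult[OF this has_vector_derivative_ee]
    show "(h has_vector_derivative h' x) (at x)" unfolding h_def h'_def by simp
  next
    show "continuous_on {0..1} h" unfolding h_def
      by (intro continuous_intros continuous_on_ee continuous_on_of_real continuous_on_subset[OF c]) auto
  qed simp
  moreover have "h 1 - h 0 = 0"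
  proof -
    have "ee w 1 = ee w 0" using ee_shift[OF w, of 0 1] by simp
    then show ?thesis using ge_per[OF k, of e] by (simp add: h_def)
  qed
  ultimately have H: "(h' has_integral 0) {0..1}" by simp
  have "((\<lambda>t. h' t - (- \<i> * of_real w) * (of_real (ge l k e t) * ee w t)) has_integral 0 - (- \<i> * of_real w) * J) {0..1}"
    by (intro has_integral_diff H has_integral_mult_right J)
  moreover have "h' t - (- \<i> * of_real w) * (of_real (ge l k e t) * ee w t) = of_real (G' t) * ee w t" for t
    unfolding h'_def by (simp add: algebra_simps)
  ultimately show ?thesis by simp
qed


definition Dc :: "(real \<Rightarrow> complex) \<Rightarrow> real \<Rightarrow> complex" where
  "Dc f t = (if \<exists>D. (f has_vector_derivative D) (at t) then vector_derivative f (at t) else 0)"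

definition thc :: "nat \<Rightarrow> int \<Rightarrow> nat \<Rightarrow> real \<Rightarrow> complex" where
  "thc l k e t = complex_of_real (theta l k e t)"

lemma Dc_at: "(f has_vector_derivative D) (at t) \<Longrightarrow> Dc f t = D"
  unfolding Dc_def using vector_derivative_at by auto

lemma Dc_theta:
  assumes k: "0 \<le> k" "k < 2 ^ l" and n: "nice (ge l k e) G' K" and t: "t \<in> {0<..<1} - K"
  shows "Dc (thc l k e) t = of_real (G' t)"
proof -
  from n t have "(ge l k e has_real_derivative G' t) (at t)" unfolding nice_def by auto
  then have "((\<lambda>t. of_real (ge l k e t)) has_vector_derivative of_real (G' t)) (at t)"
    by (rule has_vector_derivative_of_real)
  then have "(thc l k e has_vector_derivative of_real (G' t)) (at t)"
    by (rule has_vector_derivative_transform_within_open[where S="{0<..<1}"])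
       (use t in \<open>auto simp: thc_def theta_eq_ge[OF k]\<close>)
  then show ?thesis by (rule Dc_at)
qed

lemma lborel_from_HK:
  fixes f :: "real \<Rightarrow> complex"
  assumes I: "(f has_integral I) UNIV" and m: "f \<in> borel_measurable borel"
    and B: "AE x in lborel. x \<in> {0<..<1} \<longrightarrow> norm (f x) \<le> B"
    and z: "\<And>x. x \<notin> {0<..<1} \<Longrightarrow> f x = 0"
  shows "integrable lborel f \<and> integral\<^sup>L lborel f = I"
proof -
  have int: "integrable lborel f"
    by (rule integrableI_bounded_set[where A="{0<..<1}" and B=B]) (use m B z in auto)
  from has_integral_integral_lborel[OF int] I have "integral\<^sup>L lborel f = I"
    by (rule has_integral_unique)
  with int show ?thesis by simp
qed

definition Jf :: "nat \<Rightarrow> int \<Rightarrow> nat \<Rightarrow> int \<Rightarrow> complex" where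
  "Jf l k e q = integral UNIV (\<lambda>s. of_real (fe l k e s) * ee (2 * pi * of_int q) s)"

lemma Jf:
  "((\<lambda>s. of_real (fe l k e s) * ee (2 * pi * of_int q) s) has_integral Jf l k e q) UNIV"
proof (cases "q = 0")
  case True
  then show ?thesis unfolding Jf_def using fe_fourier_0[of l k e] by (simp add: integral_unique)
next
  case False
  then have "2 * pi * of_int q \<noteq> 0" by simp
  from fe_fourier_nz[OF this, of l k e] show ?thesis unfolding Jf_def
    using integrable_integral has_integral_integrable by blast
qed

definition F0 :: "nat \<Rightarrow> int \<Rightarrow> nat \<Rightarrow> int \<Rightarrow> real \<Rightarrow> complex" where
  "F0 l k e q t = indicator {0<..<1} t *\<^sub>R (thc l k e t * ee (2 * pi * of_int q) t)"

definition F1 :: "nat \<Rightarrow> int \<Rightarrow> nat \<Rightarrow> int \<Rightarrow> real \<Rightarrow> complex" where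
  "F1 l k e q t = indicator {0<..<1} t *\<^sub>R (Dc (thc l k e) t * ee (2 * pi * of_int q) t)"

lemma restrict_Ioo01:
  fixes f :: "real \<Rightarrow> complex"
  assumes "(f has_integral I) {0..1}"
  shows "((\<lambda>t. indicator {0<..<1} t *\<^sub>R f t) has_integral I) UNIV"
proof -
  have H0: "((\<lambda>t. if t \<in> {0..1} then f t else 0) has_integral I) UNIV"
    using assms has_integral_restrict_UNIV by blast
  show ?thesis
    by (rule has_integral_spike_finite[where S="{0,1}", OF _ _ H0]) (auto simp: indicator_def)
qed

lemma ge_bounded: "\<exists>B. \<forall>t\<in>{0..1}. norm (of_real (ge l k e t) :: complex) \<le> B"
proof -
  obtain G' K where n: "nice (ge l k e) G' K" using nice_ge by blast
  then have c: "continuous_on {0..1} (\<lambda>t. of_real (ge l k e t) :: complex)"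
    unfolding nice_def by (auto intro!: continuous_intros intro: continuous_on_subset)
  have "compact ((\<lambda>t. of_real (ge l k e t) :: complex) ` {0..1})"
    by (rule compact_continuous_image[OF c]) simp
  then have "bounded ((\<lambda>t. of_real (ge l k e t) :: complex) ` {0..1})" by (rule compact_imp_bounded)
  then show ?thesis unfolding bounded_iff by auto
qed

lemma ge_measurable[measurable]: "ge l k e \<in> borel_measurable borel"
proof -
  obtain G' K where n: "nice (ge l k e) G' K" using nice_ge by blast
  then show ?thesis unfolding nice_def by (auto intro: borel_measurable_continuous_onI)
qed

lemma ee_measurable[measurable]: "ee w \<in> borel_measurable borel"
  by (rule borel_measurable_continuous_onI) (rule continuous_on_ee)

lemma F0_int:
  assumes k: "0 \<le> k" "k < 2 ^ l"
  shows "integrable lborel (F0 l k e q) \<and> integral\<^sup>L lborel (F0 l k e q) = Jf l k e q"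
proof -
  define w where "w = 2 * pi * of_int q"
  have eq: "F0 l k e q t = indicator {0<..<1} t *\<^sub>R (of_real (ge l k e t) * ee w t)" for t
    by (cases "t \<in> {0<..<1}") (auto simp: F0_def thc_def theta_eq_ge[OF k] w_def)
  have H: "((\<lambda>t. of_real (ge l k e t) * ee w t) has_integral Jf l k e q) {0..1}"
    by (rule ge_fourier[OF k w_def]) (use Jf in \<open>simp add: w_def\<close>)
  obtain B where B: "\<forall>t\<in>{0..1}. norm (of_real (ge l k e t) :: complex) \<le> B" using ge_bounded by blast
  show ?thesis
  proof (rule lborel_from_HK[where B=B])
    show "(F0 l k e q has_integral Jf l k e q) UNIV"
      unfolding eq[abs_def] by (rule restrict_Ioo01[OF H])
    show "F0 l k e q \<in> borel_measurable borel"
      unfolding eq[abs_def] by measurable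
    show "AE x in lborel. x \<in> {0<..<1} \<longrightarrow> norm (F0 l k e q x) \<le> B"
      using B by (auto simp: eq norm_mult)
    show "F0 l k e q x = 0" if "x \<notin> {0<..<1}" for x using that by (simp add: F0_def)
  qed
qed


lemma F1_int:
  assumes k: "0 \<le> k" "k < 2 ^ l"
  shows "integrable lborel (F1 l k e q) \<and> integral\<^sup>L lborel (F1 l k e q) = (\<i> * of_real (2 * pi * of_int q)) * Jf l k e q"
proof -
  define w where "w = 2 * pi * of_int q"
  obtain G' K where n: "nice (ge l k e) G' K" using nice_ge by blast
  from n have fin: "finite K" and Gm[measurable]: "G' \<in> borel_measurable borel" and "\<exists>B. \<forall>x. \<bar>G' x\<bar> \<le> B"
    unfolding nice_def by auto
  then obtain B where B: "\<And>x. \<bar>G' x\<bar> \<le> B" by auto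
  have [measurable]: "K \<in> sets borel" using fin by (simp add: finite_imp_closed)
  have [measurable]: "ee w \<in> borel_measurable borel" by (rule ee_measurable)
  have [measurable]: "G' \<in> borel_measurable borel" by (rule Gm)
  define F1' where "F1' t = indicator {0<..<1} t *\<^sub>R (of_real (G' t) * ee w t)" for t
  have eqK: "F1 l k e q t = F1' t" if "t \<notin> K" for t
    by (cases "t \<in> {0<..<1}") (use that in \<open>auto simp: F1_def F1'_def Dc_theta[OF k n] w_def\<close>)
  have H: "((\<lambda>t. of_real (ge l k e t) * ee w t) has_integral Jf l k e q) {0..1}"
    by (rule ge_fourier[OF k w_def]) (use Jf in \<open>simp add: w_def\<close>)
  have H1: "(F1' has_integral (\<i> * of_real w) * Jf l k e q) UNIV"
    unfolding F1'_def[abs_def] by (rule restrict_Ioo01[OF ge_deriv_int[OF k w_def n H]])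
  have meq: "F1 l k e q = (\<lambda>t. (\<Sum>c\<in>K. indicator {c} t *\<^sub>R F1 l k e q c) + indicator (- K) t *\<^sub>R F1' t)"
  proof
    fix t
    show "F1 l k e q t = (\<Sum>c\<in>K. indicator {c} t *\<^sub>R F1 l k e q c) + indicator (- K) t *\<^sub>R F1' t"
    proof (cases "t \<in> K")
      case True
      have "(\<Sum>c\<in>K. indicator {c} t *\<^sub>R F1 l k e q c) = (\<Sum>c\<in>K. if c = t then F1 l k e q t else 0)"
        by (rule sum.cong) (auto simp: indicator_def)
      also have "\<dots> = F1 l k e q t" using True fin by simp
      finally show ?thesis using True by simp
    next
      case False
      have "(\<Sum>c\<in>K. indicator {c} t *\<^sub>R F1 l k e q c) = 0"
        by (rule sum.neutral) (use False in \<open>auto simp: indicator_def\<close>)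
      then show ?thesis using False eqK by simp
    qed
  qed
  have "integrable lborel (F1 l k e q) \<and> integral\<^sup>L lborel (F1 l k e q) = (\<i> * of_real w) * Jf l k e q"
  proof (rule lborel_from_HK[where B=B])
    show "(F1 l k e q has_integral (\<i> * of_real w) * Jf l k e q) UNIV"
      by (rule has_integral_spike_finite[OF fin _ H1]) (simp add: eqK)
    show "F1 l k e q \<in> borel_measurable borel"
      by (subst meq) (unfold F1'_def, measurable)
    have "AE x in lborel. x \<notin> K" by (rule AE_not_in[OF finite_imp_null_set_lborel[OF fin]])
    then show "AE x in lborel. x \<in> {0<..<1} \<longrightarrow> norm (F1 l k e q x) \<le> B"
    proof (rule AE_mp, intro AE_I2 impI)
      fix x assume "x \<notin> K" "x \<in> {0<..<1}"
      then show "norm (F1 l k e q x) \<le> B" using B[of x] by (simp add: eqK F1'_def norm_mult)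
    qed
    show "F1 l k e q x = 0" if "x \<notin> {0<..<1}" for x using that by (simp add: F1_def)
  qed
  then show ?thesis by (simp add: w_def)
qed


lemma Dc_const: "Dc (\<lambda>t. c) s = 0"
  by (rule Dc_at) (rule has_vector_derivative_const)

lemma Dc_cmult: "Dc (\<lambda>t. C * f t) s = C * Dc f s"
proof (cases "C = 0")
  case True
  then show ?thesis using Dc_const[of 0 s] by simp
next
  case C: False
  show ?thesis
  proof (cases "\<exists>D. (f has_vector_derivative D) (at s)")
    case True
    then obtain D where D: "(f has_vector_derivative D) (at s)" by blast
    then have "((\<lambda>t. C * f t) has_vector_derivative C * D) (at s)"
      by (rule has_vector_derivative_mult_right)
    then show ?thesis using Dc_at[OF D] Dc_at by simp
  next
    case False
    have "\<not> (\<exists>D. ((\<lambda>t. C * f t) has_vector_derivative D) (at s))"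
    proof
      assume "\<exists>D. ((\<lambda>t. C * f t) has_vector_derivative D) (at s)"
      then obtain D where "((\<lambda>t. C * f t) has_vector_derivative D) (at s)" by blast
      then have "((\<lambda>t. inverse C * (C * f t)) has_vector_derivative inverse C * D) (at s)"
        by (rule has_vector_derivative_mult_right)
      moreover have "(\<lambda>t. inverse C * (C * f t)) = f" using C by (auto simp: field_simps)
      ultimately have "(f has_vector_derivative inverse C * D) (at s)" by simp
      with False show False by blast
    qed
    then show ?thesis using False by (simp add: Dc_def)
  qed
qed

lemma pd_Dc: "pd j u x = Dc (\<lambda>t. u (x(j := t))) (x j)"
  unfolding pd_def Dc_def by simp

lemma PSI_prod: "PSI n l k e x = (\<Prod>i<n. thc l (k i) (e i) (x i))"
  unfolding PSI_def psi_iso_def thc_def by simp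

lemma pd_PSI:
  assumes j: "j < n"
  shows "pd j (PSI n l k e) x = (\<Prod>i<n. if i = j then Dc (thc l (k i) (e i)) (x i) else thc l (k i) (e i) (x i))"
proof -
  define C where "C = (\<Prod>i\<in>{..<n} - {j}. thc l (k i) (e i) (x i))"
  have "PSI n l k e (x(j := t)) = C * thc l (k j) (e j) t" for t
  proof -
    have "PSI n l k e (x(j := t)) = thc l (k j) (e j) t * (\<Prod>i\<in>{..<n} - {j}. thc l (k i) (e i) ((x(j := t)) i))"
      unfolding PSI_prod using j by (subst prod.remove[of _ j]) auto
    also have "(\<Prod>i\<in>{..<n} - {j}. thc l (k i) (e i) ((x(j := t)) i)) = C"
      unfolding C_def by (rule prod.cong) auto
    finally show ?thesis by (simp only: mult.commute)
  qed
  then have "pd j (PSI n l k e) x = C * Dc (thc l (k j) (e j)) (x j)"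
    by (simp add: pd_Dc Dc_cmult)
  also have "\<dots> = (\<Prod>i<n. if i = j then Dc (thc l (k i) (e i)) (x i) else thc l (k i) (e i) (x i))"
    unfolding C_def using j by (subst prod.remove[of _ j]) (auto intro!: prod.cong)
  finally show ?thesis .
qed

lemma pd_xi:
  assumes j: "j < n"
  shows "pd j (xi n q) x = (2 * pi * \<i> * of_int (q j)) * xi n q x"
proof -
  define c where "c = 2 * pi * \<i> * of_int (q j)"
  define d where "d = 2 * pi * \<i> * complex_of_real (\<Sum>i\<in>{..<n} - {j}. real_of_int (q i) * x i)"
  have eq: "xi n q (x(j := t)) = exp (c * of_real t + d)" for t
  proof -
    have "(\<Sum>i<n. real_of_int (q i) * (x(j := t)) i) = real_of_int (q j) * t + (\<Sum>i\<in>{..<n} - {j}. real_of_int (q i) * x i)"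
      using j by (subst sum.remove[of _ j]) (auto intro!: sum.cong)
    then show ?thesis unfolding xi_def c_def d_def by (simp add: algebra_simps)
  qed
  have "((\<lambda>z. exp (c * z + d)) has_field_derivative c * exp (c * of_real (x j) + d)) (at (of_real (x j)))"
    by (auto intro!: derivative_eq_intros)
  from has_vector_derivative_real_field[OF this]
  have "((\<lambda>t. xi n q (x(j := t))) has_vector_derivative c * exp (c * of_real (x j) + d)) (at (x j))"
    unfolding eq by simp
  then have "pd j (xi n q) x = c * exp (c * of_real (x j) + d)"
    unfolding pd_Dc by (rule Dc_at)
  also have "exp (c * of_real (x j) + d) = xi n q x"
    using eq[of "x j"] by simp
  finally show ?thesis by (simp add: c_def)
qed

lemma cnj_xi: "cnj (xi n q x) = (\<Prod>i<n. ee (2 * pi * of_int (q i)) (x i))"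
proof -
  have "cnj (xi n q x) = exp (\<Sum>i<n. - (\<i> * complex_of_real (2 * pi * of_int (q i) * x i)))"
    unfolding xi_def exp_cnj
    by (simp add: sum_negf[symmetric] sum_distrib_left of_real_sum algebra_simps)
  also have "\<dots> = (\<Prod>i<n. ee (2 * pi * of_int (q i)) (x i))"
    unfolding exp_sum[OF finite_lessThan] ee_def by simp
  finally show ?thesis .
qed


lemma psf: "product_sigma_finite (\<lambda>_::nat. lborel::real measure)"
  unfolding product_sigma_finite_def using sigma_finite_lborel by simp

lemma prod_int:
  assumes "\<And>i. i < n \<Longrightarrow> integrable lborel (f i)"
  shows "integrable (cube_measure n) (\<lambda>x. \<Prod>i<n. f i (x i))"
    "integral\<^sup>L (cube_measure n) (\<lambda>x. \<Prod>i<n. (f i (x i) :: complex)) = (\<Prod>i<n. integral\<^sup>L lborel (f i))"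
  unfolding cube_measure_def
  using product_sigma_finite.product_integrable_prod[OF psf, of "{..<n}" f]
        product_sigma_finite.product_integral_prod[OF psf, of "{..<n}" f] assms by auto

lemma space_cube: "space (cube_measure n) = (\<Pi>\<^sub>E i\<in>{..<n}. UNIV)"
  by (simp add: cube_measure_def space_PiM)

lemma ind_cube:
  assumes x: "x \<in> space (cube_measure n)"
  shows "indicator (cube n) x = (\<Prod>i<n. indicator {0<..<1} (x i) :: real)"
proof (cases "x \<in> cube n")
  case True
  then have c: "x \<in> (\<Pi>\<^sub>E i\<in>{..<n}. {0<..<1})" by (simp only: cube_def)
  have a: "x i \<in> {0<..<1}" if "i < n" for i
    using PiE_mem[OF c, of i] that by simp
  have "(\<Prod>i<n. indicator {0<..<1} (x i) :: real) = (\<Prod>i<n. 1)"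
    by (rule prod.cong[OF refl]) (use a in \<open>auto simp: indicator_def\<close>)
  then show ?thesis using True by simp
next
  case False
  have ext: "x \<in> extensional {..<n}" using x by (simp add: space_cube PiE_iff)
  have "\<exists>i<n. x i \<notin> {0<..<1}"
  proof (rule ccontr)
    assume "\<not> (\<exists>i<n. x i \<notin> {0<..<1})"
    then have "\<forall>i\<in>{..<n}. x i \<in> {0<..<1}" by simp
    with ext have "x \<in> cube n" unfolding cube_def PiE_iff by blast
    with False show False by simp
  qed
  then obtain i where i: "i < n" "x i \<notin> {0<..<1}" by blast
  have "(\<Prod>i<n. indicator {0<..<1} (x i) :: real) = 0"
  proof (rule prod_zero)
    have "indicator {0<..<1} (x i) = (0::real)" using i(2) by simp
    then show "\<exists>a\<in>{..<n}. indicator {0<..<1} (x a) = (0::real)" using i(1) by blast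
  qed simp
  then show ?thesis using False by simp
qed

lemma scaleR_prod: "(\<Prod>i\<in>A. (a i::real) *\<^sub>R (z i :: complex)) = (\<Prod>i\<in>A. a i) *\<^sub>R (\<Prod>i\<in>A. z i)"
  by (simp add: scaleR_conv_of_real prod.distrib of_real_prod)

lemma integrand_generic:
  assumes x: "x \<in> space (cube_measure n)"
  shows "indicator (cube n) x *\<^sub>R ((\<Prod>i<n. G i) * cnj (xi n q x)) =
     (\<Prod>i<n. indicator {0<..<1} (x i) *\<^sub>R (G i * ee (2 * pi * of_int (q i)) (x i)))"
  unfolding ind_cube[OF x] cnj_xi scaleR_prod prod.distrib by simp

abbreviation "JJ l k e q i \<equiv> Jf l (k i) (e i) (q i)"

lemma ip_formula:
  assumes k: "\<forall>i<n. 0 \<le> k i \<and> k i < 2 ^ l"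
  shows "ip n (PSI n l k e) (xi n q) = (\<Prod>i<n. JJ l k e q i)"
proof -
  have "ip n (PSI n l k e) (xi n q) = integral\<^sup>L (cube_measure n) (\<lambda>x. \<Prod>i<n. F0 l (k i) (e i) (q i) (x i))"
    unfolding ip_def set_lebesgue_integral_def
    by (rule Bochner_Integration.integral_cong[OF refl]) (simp add: PSI_prod integrand_generic F0_def)
  also have "\<dots> = (\<Prod>i<n. integral\<^sup>L lborel (F0 l (k i) (e i) (q i)))"
    by (rule prod_int) (use F0_int k in auto)
  also have "\<dots> = (\<Prod>i<n. JJ l k e q i)"
    by (rule prod.cong) (use F0_int k in auto)
  finally show ?thesis .
qed

lemma prod_if_j:
  assumes "j < (n::nat)"
  shows "(\<Prod>i<n. if i = j then a * f i else (f i :: complex)) = a * (\<Prod>i<n. f i)"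
proof -
  have "(\<Prod>i<n. if i = j then a * f i else f i) = (a * f j) * (\<Prod>i\<in>{..<n} - {j}. if i = j then a * f i else f i)"
    using assms by (subst prod.remove[of _ j]) auto
  also have "(\<Prod>i\<in>{..<n} - {j}. if i = j then a * f i else f i) = (\<Prod>i\<in>{..<n} - {j}. f i)"
    by (rule prod.cong) auto
  also have "f j * (\<Prod>i\<in>{..<n} - {j}. f i) = (\<Prod>i<n. f i)"
    using assms by (subst (2) prod.remove[of _ j]) auto
  ultimately show ?thesis by (simp add: mult.assoc)
qed

lemma pd_int:
  assumes k: "\<forall>i<n. 0 \<le> k i \<and> k i < 2 ^ l" and j: "j < n"
  shows "integrable (cube_measure n) (\<lambda>x. indicator (cube n) x *\<^sub>R (pd j (PSI n l k e) x * cnj (xi n q x)))"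
    "integral\<^sup>L (cube_measure n) (\<lambda>x. indicator (cube n) x *\<^sub>R (pd j (PSI n l k e) x * cnj (xi n q x)))
      = (\<i> * of_real (2 * pi * of_int (q j))) * (\<Prod>i<n. JJ l k e q i)"
proof -
  define Fs where "Fs i = (if i = j then F1 l (k i) (e i) (q i) else F0 l (k i) (e i) (q i))" for i
  have eq: "indicator (cube n) x *\<^sub>R (pd j (PSI n l k e) x * cnj (xi n q x)) = (\<Prod>i<n. Fs i (x i))"
    if x: "x \<in> space (cube_measure n)" for x
    unfolding pd_PSI[OF j] integrand_generic[OF x] Fs_def
    by (rule prod.cong) (auto simp: F0_def F1_def)
  have intF: "integrable lborel (Fs i)" if "i < n" for i
    using F0_int F1_int k that by (auto simp: Fs_def)
  have "integrable (cube_measure n) (\<lambda>x. \<Prod>i<n. Fs i (x i))" by (rule prod_int(1)[OF intF])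
  then show "integrable (cube_measure n) (\<lambda>x. indicator (cube n) x *\<^sub>R (pd j (PSI n l k e) x * cnj (xi n q x)))"
    by (rule Bochner_Integration.integrable_cong[OF refl eq, THEN iffD2, rotated]) 
  have "integral\<^sup>L (cube_measure n) (\<lambda>x. indicator (cube n) x *\<^sub>R (pd j (PSI n l k e) x * cnj (xi n q x)))
      = integral\<^sup>L (cube_measure n) (\<lambda>x. \<Prod>i<n. Fs i (x i))"
    by (rule Bochner_Integration.integral_cong[OF refl eq])
  also have "\<dots> = (\<Prod>i<n. integral\<^sup>L lborel (Fs i))" by (rule prod_int(2)[OF intF])
  also have "\<dots> = (\<Prod>i<n. if i = j then (\<i> * of_real (2 * pi * of_int (q j))) * JJ l k e q i else JJ l k e q i)"
    by (rule prod.cong) (use F0_int F1_int k in \<open>auto simp: Fs_def\<close>)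
  also have "\<dots> = (\<i> * of_real (2 * pi * of_int (q j))) * (\<Prod>i<n. JJ l k e q i)"
    by (rule prod_if_j[OF j])
  finally show "integral\<^sup>L (cube_measure n) (\<lambda>x. indicator (cube n) x *\<^sub>R (pd j (PSI n l k e) x * cnj (xi n q x)))
      = (\<i> * of_real (2 * pi * of_int (q j))) * (\<Prod>i<n. JJ l k e q i)" .
qed

lemma gip_formula:
  assumes k: "\<forall>i<n. 0 \<le> k i \<and> k i < 2 ^ l"
  shows "gip n (PSI n l k e) (xi n q) = (\<Sum>j<n. of_real (4 * pi^2 * (of_int (q j))^2)) * (\<Prod>i<n. JJ l k e q i)"
proof -
  have "gip n (PSI n l k e) (xi n q) = integral\<^sup>L (cube_measure n)
     (\<lambda>x. \<Sum>j<n. cnj (2 * pi * \<i> * of_int (q j)) * (indicator (cube n) x *\<^sub>R (pd j (PSI n l k e) x * cnj (xi n q x))))"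
    unfolding gip_def set_lebesgue_integral_def
    by (rule Bochner_Integration.integral_cong[OF refl]) (simp add: pd_xi scaleR_sum_right algebra_simps)
  also have "\<dots> = (\<Sum>j<n. integral\<^sup>L (cube_measure n) (\<lambda>x. cnj (2 * pi * \<i> * of_int (q j)) * (indicator (cube n) x *\<^sub>R (pd j (PSI n l k e) x * cnj (xi n q x)))))"
    by (rule Bochner_Integration.integral_sum) (intro integrable_mult_right pd_int(1)[OF k], simp)
  also have "\<dots> = (\<Sum>j<n. cnj (2 * pi * \<i> * of_int (q j)) * integral\<^sup>L (cube_measure n) (\<lambda>x. indicator (cube n) x *\<^sub>R (pd j (PSI n l k e) x * cnj (xi n q x))))"
    by (simp only: integral_mult_right_zero)
  also have "\<dots> = (\<Sum>j<n. cnj (2 * pi * \<i> * of_int (q j)) * ((\<i> * of_real (2 * pi * of_int (q j))) * (\<Prod>i<n. JJ l k e q i)))"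
    by (rule sum.cong[OF refl]) (subst pd_int(2)[OF k], simp_all)
  also have "\<dots> = (\<Sum>j<n. of_real (4 * pi^2 * (of_int (q j))^2)) * (\<Prod>i<n. JJ l k e q i)"
    by (subst sum_distrib_right, rule sum.cong[OF refl]) (simp add: power2_eq_square algebra_simps)
  finally show ?thesis .
qed

lemma dirder_formula:
  assumes k: "\<forall>i<n. 0 \<le> k i \<and> k i < 2 ^ l"
  shows "ip n (dirder n \<beta> (PSI n l k e)) (xi n q) = (\<Sum>j<n. of_real (\<beta> j) * (\<i> * of_real (2 * pi * of_int (q j)))) * (\<Prod>i<n. JJ l k e q i)"
proof -
  have "ip n (dirder n \<beta> (PSI n l k e)) (xi n q) = integral\<^sup>L (cube_measure n)
     (\<lambda>x. \<Sum>j<n. of_real (\<beta> j) * (indicator (cube n) x *\<^sub>R (pd j (PSI n l k e) x * cnj (xi n q x))))"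
    unfolding ip_def set_lebesgue_integral_def dirder_def
    by (rule Bochner_Integration.integral_cong[OF refl]) (simp add: scaleR_conv_of_real sum_distrib_left sum_distrib_right algebra_simps)
  also have "\<dots> = (\<Sum>j<n. integral\<^sup>L (cube_measure n) (\<lambda>x. of_real (\<beta> j) * (indicator (cube n) x *\<^sub>R (pd j (PSI n l k e) x * cnj (xi n q x)))))"
    by (rule Bochner_Integration.integral_sum) (intro integrable_mult_right pd_int(1)[OF k], simp)
  also have "\<dots> = (\<Sum>j<n. of_real (\<beta> j) * integral\<^sup>L (cube_measure n) (\<lambda>x. indicator (cube n) x *\<^sub>R (pd j (PSI n l k e) x * cnj (xi n q x))))"
    by (simp only: integral_mult_right_zero)
  also have "\<dots> = (\<Sum>j<n. of_real (\<beta> j) * ((\<i> * of_real (2 * pi * of_int (q j))) * (\<Prod>i<n. JJ l k e q i)))"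
    by (rule sum.cong[OF refl]) (subst pd_int(2)[OF k], simp_all)
  also have "\<dots> = (\<Sum>j<n. of_real (\<beta> j) * (\<i> * of_real (2 * pi * of_int (q j)))) * (\<Prod>i<n. JJ l k e q i)"
    by (subst sum_distrib_right, rule sum.cong[OF refl]) (simp add: algebra_simps)
  finally show ?thesis .
qed


lemma R_eq: "2 powr (real l / 2) / 2 ^ l = 2 powr (- real l / 2)"
proof -
  have "(2::real) ^ l = 2 powr real l" by (simp add: powr_realpow)
  then show ?thesis by (simp add: powr_diff[symmetric])
qed

lemma JJ0: "Jf l k e 0 = of_real (if e = 0 then 2 powr (- real l / 2) else 0)"
proof -
  have "Jf l k e 0 = of_real (if e = 0 then 2 powr (real l / 2) / 2 ^ l else 0)"
    unfolding Jf_def using fe_fourier_0[of l k e] by (simp add: integral_unique)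
  then show ?thesis by (simp add: R_eq)
qed

lemma J_bounds:
  assumes q: "q \<noteq> 0"
  shows "cmod (Jf l k e q) \<le> 24 * 2 powr (real l / 2) * 2 ^ l / (2 * pi * of_int q)^2"
        "cmod (Jf l k e q) \<le> 2 * 2 powr (real l / 2) / 2 ^ l"
proof -
  have w: "2 * pi * of_int q \<noteq> 0" using q by simp
  obtain V where V: "((\<lambda>s. of_real (fe l k e s) * ee (2 * pi * of_int q) s) has_integral V) UNIV"
     "norm V \<le> 24 * 2 powr (real l / 2) * 2 ^ l / (2 * pi * of_int q)^2"
     "norm V \<le> 2 * 2 powr (real l / 2) / 2 ^ l"
    using fe_fourier_nz[OF w, of l k e] by blast
  have "Jf l k e q = V" unfolding Jf_def using V(1) by (simp add: integral_unique)
  with V show "cmod (Jf l k e q) \<le> 24 * 2 powr (real l / 2) * 2 ^ l / (2 * pi * of_int q)^2"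
        "cmod (Jf l k e q) \<le> 2 * 2 powr (real l / 2) / 2 ^ l" by auto
qed

lemma J_bound:
  assumes q: "q \<noteq> 0" and g: "0 \<le> \<gamma>" "\<gamma> \<le> 2"
  shows "cmod (Jf l k e q) \<le> 2 * (2 powr (- real l / 2) * (2 powr ((2 - \<gamma>) * real l) * \<bar>real_of_int q\<bar> powr (\<gamma> - 2)))"
proof -
  define R where "R = 2 powr (- real l / 2)"
  define A where "A = (2::real) ^ l"
  define Q where "Q = \<bar>real_of_int q\<bar>"
  define u where "u = A / Q"
  have Apos: "A > 0" by (simp add: A_def)
  have Apowr: "A = 2 powr real l" by (simp add: A_def powr_realpow)
  have Qpos: "Q > 0" using q by (simp add: Q_def)
  have Q2: "Q^2 = (real_of_int q)^2" by (simp add: Q_def)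
  have Rpos: "R > 0" by (simp add: R_def)
  have rRA: "2 powr (real l / 2) = R * A"
  proof -
    have "R * A = 2 powr (- real l / 2 + real l)" unfolding R_def Apowr by (rule powr_add[symmetric])
    also have "- real l / 2 + real l = real l / 2" by simp
    finally show ?thesis by simp
  qed
  have u: "u > 0" using Apos Qpos by (simp add: u_def)
  have upow: "2 powr ((2 - \<gamma>) * real l) * Q powr (\<gamma> - 2) = u powr (2 - \<gamma>)"
  proof -
    have "u powr (2 - \<gamma>) = A powr (2 - \<gamma>) / Q powr (2 - \<gamma>)"
      unfolding u_def using Apos Qpos by (simp add: powr_divide)
    also have "A powr (2 - \<gamma>) = 2 powr ((2 - \<gamma>) * real l)"
      unfolding Apowr powr_powr by (simp only: mult.commute)
    also have "1 / Q powr (2 - \<gamma>) = Q powr (\<gamma> - 2)"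
    proof -
      have "Q powr (\<gamma> - 2) = Q powr (- (2 - \<gamma>))" by simp
      also have "\<dots> = inverse (Q powr (2 - \<gamma>))" by (rule powr_minus)
      finally show ?thesis by (simp add: divide_inverse)
    qed
    ultimately show ?thesis by (simp add: divide_inverse)
  qed
  have b1: "cmod (Jf l k e q) \<le> 2 * R"
  proof -
    have "2 * 2 powr (real l / 2) / 2 ^ l = 2 * R" unfolding rRA A_def[symmetric] using Apos by simp
    then show ?thesis using J_bounds(2)[OF q, of l k e] by simp
  qed
  have b2: "cmod (Jf l k e q) \<le> R * u^2"
  proof -
    have "3 * 3 \<le> pi * pi" using pi_gt3 by (intro mult_mono) auto
    then have pi2: "pi^2 \<ge> 6" by (simp add: power2_eq_square)
    have u2: "u^2 = A^2 / (real_of_int q)^2" by (simp add: u_def power_divide Q2)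
    have pq: "(2 * pi * of_int q)^2 = 4 * pi^2 * (real_of_int q)^2" by (simp add: power_mult_distrib)
    have "24 * 2 powr (real l / 2) * 2 ^ l / (2 * pi * of_int q)^2 = 24 * (R * A) * A / (2 * pi * of_int q)^2"
      unfolding rRA A_def[symmetric] ..
    also have "\<dots> = (6 / pi^2) * (R * A * A / (real_of_int q)^2)"
      using q by (simp add: power_mult_distrib)
    also have "\<dots> \<le> 1 * (R * A * A / (real_of_int q)^2)"
    proof (rule mult_right_mono)
      show "6 / pi^2 \<le> 1" using pi2 by (simp add: divide_le_eq)
      show "0 \<le> R * A * A / (real_of_int q)^2" using Rpos Apos by simp
    qed
    also have "\<dots> = R * u^2" unfolding u2 by (simp add: power2_eq_square)
    finally show ?thesis using J_bounds(1)[OF q, of l k e] by simp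
  qed
  have "2 * R \<le> 2 * (R * u powr (2 - \<gamma>)) \<or> R * u^2 \<le> 2 * (R * u powr (2 - \<gamma>))"
  proof (cases "u \<ge> 1")
    case True
    then have "1 \<le> u powr (2 - \<gamma>)" using g by (intro ge_one_powr_ge_zero) auto
    then have "R * 1 \<le> R * u powr (2 - \<gamma>)" using Rpos by (intro mult_left_mono) auto
    then show ?thesis by auto
  next
    case False
    then have "u powr 2 \<le> u powr (2 - \<gamma>)" using g u by (intro powr_mono') auto
    moreover have "u powr 2 = u^2" using u by simp
    ultimately have "R * u^2 \<le> R * u powr (2 - \<gamma>)" using Rpos by (intro mult_left_mono) auto
    moreover have "0 \<le> R * u powr (2 - \<gamma>)" using Rpos by simp
    ultimately show ?thesis by auto
  qed
  then have "cmod (Jf l k e q) \<le> 2 * (R * u powr (2 - \<gamma>))" using b1 b2 by linarith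
  then show ?thesis unfolding upow[symmetric] R_def Q_def .
qed


lemma bnd_prod:
  "bnd n l q \<gamma> = (\<Prod>i<n. if q i \<noteq> 0 then 2 powr (- real l / 2) * (2 powr ((2 - \<gamma> i) * real l) * \<bar>real_of_int (q i)\<bar> powr (\<gamma> i - 2))
      else 2 powr (- real l / 2))"
proof -
  define S where "S = supp_v n q"
  have S: "S \<subseteq> {..<n}" "finite S" by (auto simp: S_def supp_v_def)
  have memS: "i \<in> S \<longleftrightarrow> q i \<noteq> 0" if "i < n" for i using that by (simp add: S_def supp_v_def)
  define a where "a i = - real l / 2 + (if i \<in> S then (2 - \<gamma> i) * real l else 0)" for i
  define b where "b i = (if i \<in> S then \<bar>real_of_int (q i)\<bar> powr (\<gamma> i - 2) else 1)" for i
  have "(\<Prod>i<n. if q i \<noteq> 0 then 2 powr (- real l / 2) * (2 powr ((2 - \<gamma> i) * real l) * \<bar>real_of_int (q i)\<bar> powr (\<gamma> i - 2))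
      else 2 powr (- real l / 2)) = (\<Prod>i<n. 2 powr (a i) * b i)"
  proof (rule prod.cong[OF refl])
    fix i assume "i \<in> {..<n}"
    then have i: "i < n" by simp
    show "(if q i \<noteq> 0 then 2 powr (- real l / 2) * (2 powr ((2 - \<gamma> i) * real l) * \<bar>real_of_int (q i)\<bar> powr (\<gamma> i - 2))
      else 2 powr (- real l / 2)) = 2 powr (a i) * b i"
    proof -
      have "2 powr (a i) = 2 powr (- real l / 2) * 2 powr (if i \<in> S then (2 - \<gamma> i) * real l else 0)"
        unfolding a_def by (rule powr_add)
      then show ?thesis using memS[OF i] by (simp add: b_def mult.assoc)
    qed
  qed
  also have "\<dots> = 2 powr (\<Sum>i<n. a i) * (\<Prod>i<n. b i)"
    by (simp add: prod.distrib powr_sum)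
  also have "(\<Sum>i<n. a i) = - real n * real l / 2 + (\<Sum>i\<in>S. (2 - \<gamma> i) * real l)"
  proof -
    have "(\<Sum>i<n. a i) = (\<Sum>i<n. - real l / 2) + (\<Sum>i<n. if i \<in> S then (2 - \<gamma> i) * real l else 0)"
      unfolding a_def by (rule sum.distrib)
    also have "(\<Sum>i<n. if i \<in> S then (2 - \<gamma> i) * real l else 0) = (\<Sum>i\<in>{..<n} \<inter> S. (2 - \<gamma> i) * real l)"
      by (rule sum.inter_restrict[symmetric]) simp
    also have "{..<n} \<inter> S = S" using S by auto
    finally show ?thesis by simp
  qed
  also have "(\<Sum>i\<in>S. (2 - \<gamma> i) * real l) = (2 * real (card S) - (\<Sum>i\<in>S. \<gamma> i)) * real l"
    by (simp add: sum_distrib_right[symmetric] sum_subtractf left_diff_distrib)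
  also have "(\<Prod>i<n. b i) = (\<Prod>i\<in>S. \<bar>real_of_int (q i)\<bar> powr (\<gamma> i - 2))"
  proof -
    have "(\<Prod>i<n. b i) = (\<Prod>i\<in>{..<n} \<inter> S. \<bar>real_of_int (q i)\<bar> powr (\<gamma> i - 2))"
      unfolding b_def by (rule prod.inter_restrict[symmetric]) simp
    also have "{..<n} \<inter> S = S" using S by auto
    finally show ?thesis .
  qed
  finally show ?thesis unfolding bnd_def S_def by (simp add: algebra_simps)
qed

lemma bnd_nonneg: "0 \<le> bnd n l q \<gamma>"
  unfolding bnd_def by (intro mult_nonneg_nonneg prod_nonneg) auto

lemma P_bound:
  assumes zq: "zero_v n q \<subseteq> zero_v n e" and g: "\<forall>j\<in>supp_v n q. 0 \<le> \<gamma> j \<and> \<gamma> j \<le> 2"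
  shows "cmod (\<Prod>i<n. JJ l k e q i) \<le> 2 ^ n * bnd n l q \<gamma>"
proof -
  define T where "T i = (if q i \<noteq> 0 then 2 powr (- real l / 2) * (2 powr ((2 - \<gamma> i) * real l) * \<bar>real_of_int (q i)\<bar> powr (\<gamma> i - 2))
      else 2 powr (- real l / 2))" for i
  have "cmod (\<Prod>i<n. JJ l k e q i) = (\<Prod>i<n. cmod (JJ l k e q i))" by (simp add: prod_norm)
  also have "\<dots> \<le> (\<Prod>i<n. 2 * T i)"
  proof (rule prod_mono)
    fix i assume "i \<in> {..<n}"
    then have i: "i < n" by simp
    show "0 \<le> cmod (JJ l k e q i) \<and> cmod (JJ l k e q i) \<le> 2 * T i"
    proof (cases "q i = 0")
      case True
      then have "i \<in> zero_v n q" using i by (simp add: zero_v_def supp_v_def)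
      then have "e i = 0" using zq i by (auto simp: zero_v_def supp_v_def)
      then have "cmod (JJ l k e q i) = 2 powr (- real l / 2)" using True by (simp add: JJ0)
      then show ?thesis using True by (simp add: T_def)
    next
      case False
      then have "i \<in> supp_v n q" using i by (simp add: supp_v_def)
      then have "0 \<le> \<gamma> i" "\<gamma> i \<le> 2" using g by auto
      from J_bound[OF False this] show ?thesis using False by (simp add: T_def)
    qed
  qed
  also have "\<dots> = 2 ^ n * (\<Prod>i<n. T i)" by (simp add: prod.distrib)
  also have "(\<Prod>i<n. T i) = bnd n l q \<gamma>" unfolding T_def bnd_prod ..
  finally show ?thesis .
qed


lemma pow200: "1 \<le> n \<Longrightarrow> (100::real) * 2 ^ n \<le> 200 ^ n"
proof -
  assume n: "1 \<le> n"
  have "(100::real) = 100 ^ 1" by simp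
  also have "\<dots> \<le> 100 ^ n" using n by (intro power_increasing) auto
  finally have "(100::real) * 2 ^ n \<le> 100 ^ n * 2 ^ n" by (intro mult_right_mono) auto
  also have "\<dots> = 200 ^ n" by (simp add: power_mult_distrib[symmetric])
  finally show ?thesis .
qed

lemma cauchy_schwarz_sum: "\<bar>\<Sum>j<n. (\<beta> j::real) * real_of_int (q j)\<bar> \<le> sqrt (\<Sum>j<n. (\<beta> j)\<^sup>2) * sqrt (\<Sum>j<n. (real_of_int (q j))\<^sup>2)"
proof -
  have "\<bar>\<Sum>j<n. \<beta> j * real_of_int (q j)\<bar> \<le> (\<Sum>j<n. \<bar>\<beta> j\<bar> * \<bar>real_of_int (q j)\<bar>)"
    by (rule order_trans[OF sum_abs]) (simp add: abs_mult)
  also have "\<dots> \<le> L2_set \<beta> {..<n} * L2_set (\<lambda>j. real_of_int (q j)) {..<n}"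
    by (rule L2_set_mult_ineq)
  finally show ?thesis by (simp add: L2_set_def)
qed

lemma gip_sum_eq: "(\<Sum>j<n. complex_of_real (4 * pi^2 * (real_of_int (q j))^2)) = of_real (4 * pi^2 * (\<Sum>j<n. (real_of_int (q j))^2))"
  by (simp add: sum_distrib_left)

lemma dir_sum_eq: "(\<Sum>j<n. complex_of_real (\<beta> j) * (\<i> * complex_of_real (2 * pi * real_of_int (q j))))
   = \<i> * of_real (2 * pi * (\<Sum>j<n. \<beta> j * real_of_int (q j)))"
  by (simp add: sum_distrib_left algebra_simps)

theorem lemma4p10:
  shows "(\<forall>n l0 l k e q. 1 < n \<and> 2 \<le> l0 \<and> l0 \<le> l \<and>
            (\<forall>j<n. 0 \<le> k j \<and> k j < 2 ^ l) \<and> (\<forall>j<n. e j \<in> {0, 1}) \<longrightarrow>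
          ((\<forall>j<n. q j = 0) \<longrightarrow>
              gip n (PSI n l k e) (xi n q) = 0 \<and>
              (\<forall>\<beta>. ip n (dirder n \<beta> (PSI n l k e)) (xi n q) = 0) \<and>
              cmod (ip n (PSI n l k e) (xi n q)) =
                (if \<forall>j<n. e j = 0 then 2 powr (- (real n * real l) / 2) else 0)) \<and>
          ((\<exists>j<n. q j \<noteq> 0) \<and> \<not> zero_v n q \<subseteq> zero_v n e \<longrightarrow>
              gip n (PSI n l k e) (xi n q) = 0 \<and>
              (\<forall>\<beta>. ip n (dirder n \<beta> (PSI n l k e)) (xi n q) = 0) \<and>
              ip n (PSI n l k e) (xi n q) = 0))
        \<and>
        (\<exists>c>0. \<forall>n l0 l k e q \<gamma>. 1 < n \<and> 2 \<le> l0 \<and> l0 \<le> l \<and>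
            (\<forall>j<n. 0 \<le> k j \<and> k j < 2 ^ l) \<and> (\<forall>j<n. e j \<in> {0, 1}) \<and>
            (\<exists>j<n. q j \<noteq> 0) \<and> zero_v n q \<subseteq> zero_v n e \<and>
            (\<forall>j\<in>supp_v n q. 0 \<le> \<gamma> j \<and> \<gamma> j \<le> 2) \<longrightarrow>
          cmod (gip n (PSI n l k e) (xi n q))
            \<le> c ^ n * bnd n l q \<gamma> * (\<Sum>j<n. (real_of_int (q j))\<^sup>2) \<and>
          (\<forall>\<beta>. cmod (ip n (dirder n \<beta> (PSI n l k e)) (xi n q))
            \<le> c ^ n * bnd n l q \<gamma> * sqrt (\<Sum>j<n. (\<beta> j)\<^sup>2) * sqrt (\<Sum>j<n. (real_of_int (q j))\<^sup>2)) \<and>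
          cmod (ip n (PSI n l k e) (xi n q)) \<le> c ^ n * bnd n l q \<gamma>)"
proof (rule conjI)
  show "\<forall>n l0 l k e q. 1 < n \<and> 2 \<le> l0 \<and> l0 \<le> l \<and>
            (\<forall>j<n. 0 \<le> k j \<and> k j < 2 ^ l) \<and> (\<forall>j<n. e j \<in> {0, 1}) \<longrightarrow>
          ((\<forall>j<n. q j = 0) \<longrightarrow>
              gip n (PSI n l k e) (xi n q) = 0 \<and>
              (\<forall>\<beta>. ip n (dirder n \<beta> (PSI n l k e)) (xi n q) = 0) \<and>
              cmod (ip n (PSI n l k e) (xi n q)) =
                (if \<forall>j<n. e j = 0 then 2 powr (- (real n * real l) / 2) else 0)) \<and>
          ((\<exists>j<n. q j \<noteq> 0) \<and> \<not> zero_v n q \<subseteq> zero_v n e \<longrightarrow>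
              gip n (PSI n l k e) (xi n q) = 0 \<and>
              (\<forall>\<beta>. ip n (dirder n \<beta> (PSI n l k e)) (xi n q) = 0) \<and>
              ip n (PSI n l k e) (xi n q) = 0)"
  proof (intro allI impI)
    fix n l0 l :: nat and k :: "nat \<Rightarrow> int" and e :: "nat \<Rightarrow> nat" and q :: "nat \<Rightarrow> int"
    assume H: "1 < n \<and> 2 \<le> l0 \<and> l0 \<le> l \<and> (\<forall>j<n. 0 \<le> k j \<and> k j < 2 ^ l) \<and> (\<forall>j<n. e j \<in> {0, 1})"
    then have kb: "\<forall>i<n. 0 \<le> k i \<and> k i < 2 ^ l" by blast
    show "((\<forall>j<n. q j = 0) \<longrightarrow>
              gip n (PSI n l k e) (xi n q) = 0 \<and>
              (\<forall>\<beta>. ip n (dirder n \<beta> (PSI n l k e)) (xi n q) = 0) \<and>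
              cmod (ip n (PSI n l k e) (xi n q)) =
                (if \<forall>j<n. e j = 0 then 2 powr (- (real n * real l) / 2) else 0)) \<and>
          ((\<exists>j<n. q j \<noteq> 0) \<and> \<not> zero_v n q \<subseteq> zero_v n e \<longrightarrow>
              gip n (PSI n l k e) (xi n q) = 0 \<and>
              (\<forall>\<beta>. ip n (dirder n \<beta> (PSI n l k e)) (xi n q) = 0) \<and>
              ip n (PSI n l k e) (xi n q) = 0)"
    proof (rule conjI; rule impI)
      assume q0: "\<forall>j<n. q j = 0"
      have g: "gip n (PSI n l k e) (xi n q) = 0"
        unfolding gip_formula[OF kb] using q0 by (simp add: sum.neutral)
      moreover have d: "ip n (dirder n \<beta> (PSI n l k e)) (xi n q) = 0" for \<beta>
        unfolding dirder_formula[OF kb] using q0 by (simp add: sum.neutral)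
      moreover have "cmod (ip n (PSI n l k e) (xi n q)) =
                (if \<forall>j<n. e j = 0 then 2 powr (- (real n * real l) / 2) else 0)"
      proof (cases "\<forall>j<n. e j = 0")
        case True
        have "(\<Prod>i<n. JJ l k e q i) = (\<Prod>i<n. complex_of_real (2 powr (- real l / 2)))"
          by (rule prod.cong[OF refl]) (use True q0 in \<open>simp add: JJ0\<close>)
        also have "\<dots> = of_real ((2 powr (- real l / 2)) ^ n)" by (simp add: of_real_power)
        also have "(2 powr (- real l / 2)) ^ n = (2::real) powr (- (real n * real l) / 2)"
          by (simp add: powr_power)
        finally show ?thesis unfolding ip_formula[OF kb] using True by simp
      next
        case False
        then obtain i where i: "i < n" "e i \<noteq> 0" by blast
        have P0: "(\<Prod>i<n. JJ l k e q i) = 0"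
        proof (rule prod_zero)
          show "\<exists>a\<in>{..<n}. JJ l k e q a = 0" using i q0 by (intro bexI[of _ i]) (simp_all add: JJ0)
        qed simp
        show ?thesis unfolding ip_formula[OF kb] P0 using False by simp
      qed
      ultimately show "gip n (PSI n l k e) (xi n q) = 0 \<and>
              (\<forall>\<beta>. ip n (dirder n \<beta> (PSI n l k e)) (xi n q) = 0) \<and>
              cmod (ip n (PSI n l k e) (xi n q)) =
                (if \<forall>j<n. e j = 0 then 2 powr (- (real n * real l) / 2) else 0)" by blast
    next
      assume c: "(\<exists>j<n. q j \<noteq> 0) \<and> \<not> zero_v n q \<subseteq> zero_v n e"
      then obtain i where i: "i \<in> zero_v n q" "i \<notin> zero_v n e" by blast
      then have i': "i < n" "q i = 0" "e i \<noteq> 0" by (auto simp: zero_v_def supp_v_def)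
      have P0: "(\<Prod>i<n. JJ l k e q i) = 0"
      proof (rule prod_zero)
        show "\<exists>a\<in>{..<n}. JJ l k e q a = 0" using i' by (intro bexI[of _ i]) (simp_all add: JJ0)
      qed simp
      show "gip n (PSI n l k e) (xi n q) = 0 \<and>
              (\<forall>\<beta>. ip n (dirder n \<beta> (PSI n l k e)) (xi n q) = 0) \<and>
              ip n (PSI n l k e) (xi n q) = 0"
        unfolding gip_formula[OF kb] dirder_formula[OF kb] ip_formula[OF kb] P0 by simp
    qed
  qed
next
  show "\<exists>c>0. \<forall>n l0 l k e q \<gamma>. 1 < n \<and> 2 \<le> l0 \<and> l0 \<le> l \<and>
            (\<forall>j<n. 0 \<le> k j \<and> k j < 2 ^ l) \<and> (\<forall>j<n. e j \<in> {0, 1}) \<and>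
            (\<exists>j<n. q j \<noteq> 0) \<and> zero_v n q \<subseteq> zero_v n e \<and>
            (\<forall>j\<in>supp_v n q. 0 \<le> \<gamma> j \<and> \<gamma> j \<le> 2) \<longrightarrow>
          cmod (gip n (PSI n l k e) (xi n q))
            \<le> c ^ n * bnd n l q \<gamma> * (\<Sum>j<n. (real_of_int (q j))\<^sup>2) \<and>
          (\<forall>\<beta>. cmod (ip n (dirder n \<beta> (PSI n l k e)) (xi n q))
            \<le> c ^ n * bnd n l q \<gamma> * sqrt (\<Sum>j<n. (\<beta> j)\<^sup>2) * sqrt (\<Sum>j<n. (real_of_int (q j))\<^sup>2)) \<and>
          cmod (ip n (PSI n l k e) (xi n q)) \<le> c ^ n * bnd n l q \<gamma>"
  proof (intro exI[of _ "200::real"] conjI allI impI)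
    show "(0::real) < 200" by simp
    fix n l0 l :: nat and k :: "nat \<Rightarrow> int" and e :: "nat \<Rightarrow> nat" and q :: "nat \<Rightarrow> int" and \<gamma> :: "nat \<Rightarrow> real"
    assume H: "1 < n \<and> 2 \<le> l0 \<and> l0 \<le> l \<and>
            (\<forall>j<n. 0 \<le> k j \<and> k j < 2 ^ l) \<and> (\<forall>j<n. e j \<in> {0, 1}) \<and>
            (\<exists>j<n. q j \<noteq> 0) \<and> zero_v n q \<subseteq> zero_v n e \<and>
            (\<forall>j\<in>supp_v n q. 0 \<le> \<gamma> j \<and> \<gamma> j \<le> 2)"
    then have kb: "\<forall>i<n. 0 \<le> k i \<and> k i < 2 ^ l" and zq: "zero_v n q \<subseteq> zero_v n e"
      and g: "\<forall>j\<in>supp_v n q. 0 \<le> \<gamma> j \<and> \<gamma> j \<le> 2" and n1: "1 \<le> n" by auto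
    define P where "P = (\<Prod>i<n. JJ l k e q i)"
    define B where "B = bnd n l q \<gamma>"
    have PB: "cmod P \<le> 2 ^ n * B" unfolding P_def B_def by (rule P_bound[OF zq g])
    have B0: "0 \<le> B" unfolding B_def by (rule bnd_nonneg)
    have pw: "(100::real) * 2 ^ n \<le> 200 ^ n" by (rule pow200[OF n1])
    have pi4: "pi < 4" by (rule pi_less_4)
    have pB: "2 ^ n * B * 100 \<le> 200 ^ n * B"
    proof -
      have "2 ^ n * B * 100 = (100 * 2 ^ n) * B" by simp
      also have "\<dots> \<le> 200 ^ n * B" using pw B0 by (rule mult_right_mono)
      finally show ?thesis .
    qed
    define Sq where "Sq = (\<Sum>j<n. (real_of_int (q j))\<^sup>2)"
    have Sq0: "0 \<le> Sq" unfolding Sq_def by (intro sum_nonneg) auto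
    show "cmod (gip n (PSI n l k e) (xi n q)) \<le> 200 ^ n * bnd n l q \<gamma> * (\<Sum>j<n. (real_of_int (q j))\<^sup>2)"
    proof -
      have "cmod (gip n (PSI n l k e) (xi n q)) = (4 * pi^2 * Sq) * cmod P"
        unfolding gip_formula[OF kb] gip_sum_eq P_def[symmetric] Sq_def[symmetric]
        by (simp only: norm_mult norm_of_real) (use Sq0 in simp)
      also have "\<dots> \<le> (4 * pi^2 * Sq) * (2 ^ n * B)"
        using PB Sq0 by (intro mult_left_mono) auto
      also have "\<dots> = (4 * pi^2) * (2 ^ n * B) * Sq" by simp
      also have "\<dots> \<le> 100 * (2 ^ n * B) * Sq"
      proof (rule mult_right_mono[OF _ Sq0])
        have "pi * pi \<le> 4 * 4" using pi4 pi_gt_zero by (intro mult_mono) auto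
        then have "4 * pi^2 \<le> 100" by (simp add: power2_eq_square)
        then show "4 * pi\<^sup>2 * (2 ^ n * B) \<le> 100 * (2 ^ n * B)" using B0 by (intro mult_right_mono) auto
      qed
      also have "\<dots> \<le> 200 ^ n * B * Sq" using pB Sq0 by (intro mult_right_mono) (auto simp: mult.commute)
      finally show ?thesis by (simp add: B_def Sq_def)
    qed
    fix \<beta> :: "nat \<Rightarrow> real"
    show "cmod (ip n (dirder n \<beta> (PSI n l k e)) (xi n q))
            \<le> 200 ^ n * bnd n l q \<gamma> * sqrt (\<Sum>j<n. (\<beta> j)\<^sup>2) * sqrt (\<Sum>j<n. (real_of_int (q j))\<^sup>2)"
    proof -
      define CS where "CS = sqrt (\<Sum>j<n. (\<beta> j)\<^sup>2) * sqrt (\<Sum>j<n. (real_of_int (q j))\<^sup>2)"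
      have CS0: "0 \<le> CS" unfolding CS_def by (intro mult_nonneg_nonneg real_sqrt_ge_zero sum_nonneg) auto
      have "cmod (ip n (dirder n \<beta> (PSI n l k e)) (xi n q)) = (2 * pi * \<bar>\<Sum>j<n. \<beta> j * real_of_int (q j)\<bar>) * cmod P"
        unfolding dirder_formula[OF kb] dir_sum_eq P_def[symmetric]
        by (simp only: norm_mult norm_of_real norm_ii) (simp add: abs_mult)
      also have "\<dots> \<le> (2 * pi * CS) * (2 ^ n * B)"
        using cauchy_schwarz_sum[of \<beta> q n] PB pi_gt_zero unfolding CS_def
        by (intro mult_mono) auto
      also have "\<dots> = (2 * pi) * (2 ^ n * B) * CS" by simp
      also have "\<dots> \<le> 100 * (2 ^ n * B) * CS"
        using pi4 B0 CS0 by (intro mult_right_mono) auto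
      also have "\<dots> \<le> 200 ^ n * B * CS" using pB CS0 by (intro mult_right_mono) (auto simp: mult.commute)
      finally show ?thesis by (simp add: B_def CS_def mult.assoc)
    qed
  next
    fix n l0 l :: nat and k :: "nat \<Rightarrow> int" and e :: "nat \<Rightarrow> nat" and q :: "nat \<Rightarrow> int" and \<gamma> :: "nat \<Rightarrow> real"
    assume H: "1 < n \<and> 2 \<le> l0 \<and> l0 \<le> l \<and>
            (\<forall>j<n. 0 \<le> k j \<and> k j < 2 ^ l) \<and> (\<forall>j<n. e j \<in> {0, 1}) \<and>
            (\<exists>j<n. q j \<noteq> 0) \<and> zero_v n q \<subseteq> zero_v n e \<and>
            (\<forall>j\<in>supp_v n q. 0 \<le> \<gamma> j \<and> \<gamma> j \<le> 2)"
    then have kb: "\<forall>i<n. 0 \<le> k i \<and> k i < 2 ^ l" and zq: "zero_v n q \<subseteq> zero_v n e"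
      and g: "\<forall>j\<in>supp_v n q. 0 \<le> \<gamma> j \<and> \<gamma> j \<le> 2" and n1: "1 \<le> n" by auto
    have PB: "cmod (\<Prod>i<n. JJ l k e q i) \<le> 2 ^ n * bnd n l q \<gamma>" by (rule P_bound[OF zq g])
    have B0: "0 \<le> bnd n l q \<gamma>" by (rule bnd_nonneg)
    have "2 ^ n * bnd n l q \<gamma> \<le> 200 ^ n * bnd n l q \<gamma>"
      using B0 by (intro mult_right_mono power_mono) auto
    with PB show "cmod (ip n (PSI n l k e) (xi n q)) \<le> 200 ^ n * bnd n l q \<gamma>"
      unfolding ip_formula[OF kb] by linarith
  qed
qed

end
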